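(* Let $n\neq1$ and $(bp)^2+a^2(c+b)^2\neq0$. Then the radial wave equation (A) possesses a nontrivial kinematic conservation law if and only if it has a hyperbolic quasilinear divergence form, i.e. iff $a=pb\neq0$.
   Context: Equation (A) is $u_{tt}=(c+bu^{p})\big(u_{rr}+\frac{n-1}{r}u_{r}\big)+au^{p-1}u_{r}^{2}$ for $u(t,r)$, $r>0$, $u>0$. A kinematic conservation law is one whose multiplier is a function $Q=\alpha(t,r)$ only, i.e. $\alpha\cdot(u_{tt}-\text{RHS})=D_tT+D_rX$ identically for some $T,X$. Divergence form means (A) can be written as $(r^{n-1}u_t)_t=(r^{n-1}F(u,u_r))_r$; (A) is called quasilinear hyperbolic iff $bp\neq0$. *)

theory Defs
  imports "HOL-Analysis.Analysis"
begin

definition pd_t :: "(real \<Rightarrow> real \<Rightarrow> real) \<Rightarrow> real \<Rightarrow> real \<Rightarrow> real" where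
  "pd_t f = (\<lambda>t r. deriv (\<lambda>s. f s r) t)"

definition pd_r :: "(real \<Rightarrow> real \<Rightarrow> real) \<Rightarrow> real \<Rightarrow> real \<Rightarrow> real" where
  "pd_r f = (\<lambda>t r. deriv (\<lambda>x. f t x) r)"

definition pd :: "nat \<Rightarrow> nat \<Rightarrow> (real \<Rightarrow> real \<Rightarrow> real) \<Rightarrow> real \<Rightarrow> real \<Rightarrow> real" where
  "pd i j f = (pd_t ^^ i) ((pd_r ^^ j) f)"

definition Omega :: "(real \<times> real) set" where
  "Omega = {(t, r). r > 0}"

text \<open>C-infinity on an open set U: all partial derivatives exist, are mutually
  consistent (symmetric) and jointly continuous.\<close>
definition smooth_on2 :: "(real \<times> real) set \<Rightarrow> (real \<Rightarrow> real \<Rightarrow> real) \<Rightarrow> bool" where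
  "smooth_on2 U f \<longleftrightarrow>
     (\<forall>i j. continuous_on U (\<lambda>(t, r). pd i j f t r) \<and>
       (\<forall>(t, r)\<in>U.
          ((\<lambda>s. pd i j f s r) has_real_derivative pd (Suc i) j f t r) (at t) \<and>
          ((\<lambda>x. pd i j f t x) has_real_derivative pd i (Suc j) f t r) (at r)))"

definition admissible :: "(real \<Rightarrow> real \<Rightarrow> real) \<Rightarrow> bool" where
  "admissible u \<longleftrightarrow> smooth_on2 Omega u \<and> (\<forall>(t, r)\<in>Omega. u t r > 0)"

definition jet :: "(real \<Rightarrow> real \<Rightarrow> real) \<Rightarrow> real \<Rightarrow> real \<Rightarrow> nat \<Rightarrow> nat \<Rightarrow> real" where
  "jet u t r = (\<lambda>i j. pd i j u t r)"

text \<open>A differential function: depends on (t, r) and finitely many jet coordinates.\<close>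
definition local_fun :: "(real \<Rightarrow> real \<Rightarrow> (nat \<Rightarrow> nat \<Rightarrow> real) \<Rightarrow> real) \<Rightarrow> bool" where
  "local_fun F \<longleftrightarrow> (\<exists>k. \<forall>t r J J'. (\<forall>i j. i + j \<le> k \<longrightarrow> J i j = J' i j) \<longrightarrow> F t r J = F t r J')"

definition eval_df :: "(real \<Rightarrow> real \<Rightarrow> (nat \<Rightarrow> nat \<Rightarrow> real) \<Rightarrow> real) \<Rightarrow> (real \<Rightarrow> real \<Rightarrow> real) \<Rightarrow> real \<Rightarrow> real \<Rightarrow> real" where
  "eval_df F u = (\<lambda>t r. F t r (jet u t r))"

definition Eop :: "real \<Rightarrow> real \<Rightarrow> real \<Rightarrow> real \<Rightarrow> real \<Rightarrow> (real \<Rightarrow> real \<Rightarrow> real) \<Rightarrow> real \<Rightarrow> real \<Rightarrow> real" where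
  "Eop n a b c p u t r =
     pd 2 0 u t r
     - (c + b * u t r powr p) * (pd 0 2 u t r + (n - 1) / r * pd 0 1 u t r)
     - a * u t r powr (p - 1) * (pd 0 1 u t r)\<^sup>2"

text \<open>alpha(t,r) is the multiplier of a nontrivial kinematic conservation law of (A):
  alpha is smooth, not identically zero, and alpha * E[u] = D_t T + D_r X identically
  (for all smooth positive u) with smooth differential functions T, X of finite order.\<close>
definition kinematic_cl :: "real \<Rightarrow> real \<Rightarrow> real \<Rightarrow> real \<Rightarrow> real \<Rightarrow> (real \<Rightarrow> real \<Rightarrow> real) \<Rightarrow> bool" where
  "kinematic_cl n a b c p \<alpha> \<longleftrightarrow>
     smooth_on2 Omega \<alpha> \<and> (\<exists>(t, r)\<in>Omega. \<alpha> t r \<noteq> 0) \<and>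
     (\<exists>T X. local_fun T \<and> local_fun X \<and>
        (\<forall>u. admissible u \<longrightarrow>
           smooth_on2 Omega (eval_df T u) \<and> smooth_on2 Omega (eval_df X u) \<and>
           (\<forall>(t, r)\<in>Omega.
              \<alpha> t r * Eop n a b c p u t r = pd_t (eval_df T u) t r + pd_r (eval_df X u) t r)))"

definition divergence_form :: "real \<Rightarrow> real \<Rightarrow> real \<Rightarrow> real \<Rightarrow> real \<Rightarrow> bool" where
  "divergence_form n a b c p \<longleftrightarrow>
     (\<exists>F :: real \<Rightarrow> real \<Rightarrow> real.
        (\<forall>x y. x > 0 \<longrightarrow> (\<lambda>(x, y). F x y) differentiable (at (x, y))) \<and>
        (\<forall>u. admissible u \<longrightarrow>
           (\<forall>(t, r)\<in>Omega.
              r powr (n - 1) * Eop n a b c p u t r =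
                pd_t (\<lambda>t r. r powr (n - 1) * pd 1 0 u t r) t r
                - pd_r (\<lambda>t r. r powr (n - 1) * F (u t r) (pd 0 1 u t r)) t r)))"

definition quasilinear_hyperbolic :: "real \<Rightarrow> real \<Rightarrow> bool" where
  "quasilinear_hyperbolic b p \<longleftrightarrow> b * p \<noteq> 0"

end

theory Submission
  imports Defs
begin

lemma Omega_iff[simp]: "(t, r) \<in> Omega \<longleftrightarrow> r > 0"
  by (simp add: Omega_def)

lemma open_Omega: "open Omega"
proof -
  have "Omega = {x. 0 < snd x}" by (auto simp: Omega_def)
  moreover have "open {x::real\<times>real. 0 < snd x}"
    by (rule open_Collect_less) (auto intro: continuous_intros)
  ultimately show ?thesis by simp
qed

lemma pd_Suc_t: "pd (Suc i) j f = pd_t (pd i j f)"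
  by (simp add: pd_def)

lemma pd_Suc_r: "pd i (Suc j) f = pd i j (pd_r f)"
  by (simp only: pd_def funpow_Suc_right comp_def)

lemma pd_0_0[simp]: "pd 0 0 f = f" by (simp add: pd_def)

lemma loc_pd_r:
  assumes "\<And>t r. r > 0 \<Longrightarrow> f t r = g t r" "r > 0"
  shows "pd_r f t r = pd_r g t r"
  unfolding pd_r_def
proof (rule deriv_cong_ev[OF _ refl])
  have "eventually (\<lambda>x. x \<in> {0<..}) (nhds r)" using assms(2)
    by (intro eventually_nhds_in_open) auto
  then show "eventually (\<lambda>x. f t x = g t x) (nhds r)"
    by eventually_elim (use assms(1) in auto)
qed

lemma loc_pd_t:
  assumes "\<And>t r. r > 0 \<Longrightarrow> f t r = g t r" "r > 0"
  shows "pd_t f t r = pd_t g t r"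
  unfolding pd_t_def using assms by simp

lemma loc_pd:
  assumes "\<And>t r. r > 0 \<Longrightarrow> f t r = g t r" "r > 0"
  shows "pd i j f t r = pd i j g t r"
proof -
  have R: "\<And>t r. r > 0 \<Longrightarrow> (pd_r ^^ j) f t r = (pd_r ^^ j) g t r"
  proof (induction j)
    case 0 then show ?case using assms by simp
  next
    case (Suc j)
    have "(pd_r ^^ Suc j) f t r = pd_r ((pd_r ^^ j) f) t r" by simp
    also have "\<dots> = pd_r ((pd_r ^^ j) g) t r" by (rule loc_pd_r[OF Suc.IH Suc.prems])
    finally show ?case by simp
  qed
  have "\<And>t r. r > 0 \<Longrightarrow> (pd_t ^^ i) ((pd_r ^^ j) f) t r = (pd_t ^^ i) ((pd_r ^^ j) g) t r"
  proof (induction i)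
    case 0 then show ?case using R by simp
  next
    case (Suc i)
    have "(pd_t ^^ Suc i) ((pd_r ^^ j) f) t r = pd_t ((pd_t ^^ i) ((pd_r ^^ j) f)) t r" by simp
    also have "\<dots> = pd_t ((pd_t ^^ i) ((pd_r ^^ j) g)) t r" by (rule loc_pd_t[OF Suc.IH Suc.prems])
    finally show ?case by simp
  qed
  then show ?thesis using assms by (simp add: pd_def)
qed

lemma loc_der_r:
  assumes "\<And>x. x > 0 \<Longrightarrow> f x = g x" "r > 0" "(g has_real_derivative D) (at r)"
  shows "(f has_real_derivative D) (at r)"
  by (rule has_field_derivative_transform_within_open[OF assms(3), of "{0<..}"])
     (use assms in auto)

definition sm :: "nat \<Rightarrow> (real \<Rightarrow> real \<Rightarrow> real) \<Rightarrow> bool" where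
  "sm k f \<longleftrightarrow> (\<forall>i j. i + j \<le> k \<longrightarrow> continuous_on Omega (\<lambda>(t, r). pd i j f t r) \<and>
     (\<forall>t r. r > 0 \<longrightarrow> ((\<lambda>s. pd i j f s r) has_real_derivative pd (Suc i) j f t r) (at t) \<and>
        ((\<lambda>x. pd i j f t x) has_real_derivative pd i (Suc j) f t r) (at r)))"

lemma sm_mono: "sm k f \<Longrightarrow> m \<le> k \<Longrightarrow> sm m f"
  unfolding sm_def by auto

lemma smD:
  assumes "sm k f" "i + j \<le> k"
  shows "continuous_on Omega (\<lambda>(t, r). pd i j f t r)"
    "r > 0 \<Longrightarrow> ((\<lambda>s. pd i j f s r) has_real_derivative pd (Suc i) j f t r) (at t)"
    "r > 0 \<Longrightarrow> ((\<lambda>x. pd i j f t x) has_real_derivative pd i (Suc j) f t r) (at r)"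
  using assms unfolding sm_def by auto

lemma sm_from:
  assumes eq: "\<And>i j t r. r > 0 \<Longrightarrow> i + j \<le> Suc k \<Longrightarrow> pd i j g t r = P i j t r"
    and cont: "\<And>i j. i + j \<le> k \<Longrightarrow> continuous_on Omega (\<lambda>(t, r). P i j t r)"
    and dt: "\<And>i j t r. i + j \<le> k \<Longrightarrow> r > 0 \<Longrightarrow> ((\<lambda>s. P i j s r) has_real_derivative P (Suc i) j t r) (at t)"
    and dr: "\<And>i j t r. i + j \<le> k \<Longrightarrow> r > 0 \<Longrightarrow> ((\<lambda>x. P i j t x) has_real_derivative P i (Suc j) t r) (at r)"
  shows "sm k g"
  unfolding sm_def
proof (intro allI impI conjI)
  fix i j assume ij: "i + j \<le> k"
  have eqij: "\<And>t r. r > 0 \<Longrightarrow> pd i j g t r = P i j t r" using eq ij by auto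
  show "continuous_on Omega (\<lambda>(t, r). pd i j g t r)"
    by (rule continuous_on_cong[THEN iffD2, OF refl _ cont[OF ij]]) (auto simp: Omega_def eqij)
  fix t r :: real assume r: "r > 0"
  have "(\<lambda>s. pd i j g s r) = (\<lambda>s. P i j s r)" using eq r ij by auto
  then show "((\<lambda>s. pd i j g s r) has_real_derivative pd (Suc i) j g t r) (at t)"
    using dt[OF ij r, of t] eq[OF r, of "Suc i" j] ij by simp
  show "((\<lambda>x. pd i j g t x) has_real_derivative pd i (Suc j) g t r) (at r)"
    by (rule loc_der_r[of _ "\<lambda>x. P i j t x", OF _ r]) (use eq ij dr[OF ij r, of t] eq[OF r, of i "Suc j"] in auto)
qed

lemma sm_cong:
  assumes "sm k f" "\<And>t r. r > 0 \<Longrightarrow> g t r = f t r"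
  shows "sm k g"
proof (rule sm_from[where P="\<lambda>i j. pd i j f"])
  show "\<And>i j t r. r > 0 \<Longrightarrow> i + j \<le> Suc k \<Longrightarrow> pd i j g t r = pd i j f t r"
    by (rule loc_pd[where f=g and g=f]) (use assms(2) in auto)
  show "\<And>i j. i + j \<le> k \<Longrightarrow> continuous_on Omega (\<lambda>(t, r). pd i j f t r)"
    using smD(1)[OF assms(1)] by blast
  show "\<And>i j t r. i + j \<le> k \<Longrightarrow> r > 0 \<Longrightarrow> ((\<lambda>s. pd i j f s r) has_real_derivative pd (Suc i) j f t r) (at t)"
    using smD(2)[OF assms(1)] by blast
  show "\<And>i j t r. i + j \<le> k \<Longrightarrow> r > 0 \<Longrightarrow> ((\<lambda>x. pd i j f t x) has_real_derivative pd i (Suc j) f t r) (at r)"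
    using smD(3)[OF assms(1)] by blast
qed

lemma pd_r_pd: "pd i j (pd_r f) = pd i (Suc j) f"
  by (simp add: pd_Suc_r)

lemma sm_deriv_r: "sm (Suc k) f \<Longrightarrow> sm k (pd_r f)"
  unfolding sm_def pd_r_pd by auto

lemma comm_aux:
  assumes "sm k f" "j \<le> k" "r > 0"
  shows "(pd_r ^^ j) (pd_t f) t r = pd 1 j f t r"
  using assms(2,3)
proof (induction j arbitrary: t r)
  case 0 then show ?case by (simp add: pd_def)
next
  case (Suc j)
  have "(pd_r ^^ Suc j) (pd_t f) t r = pd_r ((pd_r ^^ j) (pd_t f)) t r" by simp
  also have "\<dots> = pd_r (pd 1 j f) t r"
    by (rule loc_pd_r) (use Suc in auto)
  also have "\<dots> = pd 1 (Suc j) f t r"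
    unfolding pd_r_def by (rule DERIV_imp_deriv, rule smD(3)[OF assms(1)]) (use Suc in auto)
  finally show ?case .
qed

lemma pd_t_pd: "pd i 0 (pd_t f) = pd (Suc i) 0 f"
  by (simp add: pd_def funpow_Suc_right del: funpow.simps)

lemma pd_comm:
  assumes "sm k f" "j \<le> k" "r > 0"
  shows "pd i j (pd_t f) t r = pd (Suc i) j f t r"
proof -
  have "pd i j (pd_t f) t r = pd i 0 ((pd_r ^^ j) (pd_t f)) t r" by (simp add: pd_def)
  also have "\<dots> = pd i 0 (pd 1 j f) t r"
    by (rule loc_pd) (use comm_aux[OF assms(1,2)] assms(3) in auto)
  also have "\<dots> = pd (Suc i) j f t r"
    by (simp add: pd_def funpow_Suc_right del: funpow.simps)
  finally show ?thesis .
qed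

lemma sm_deriv_t:
  assumes "sm (Suc k) f" shows "sm k (pd_t f)"
proof (rule sm_from[where P="\<lambda>i j. pd (Suc i) j f"])
  show "\<And>i j t r. r > 0 \<Longrightarrow> i + j \<le> Suc k \<Longrightarrow> pd i j (pd_t f) t r = pd (Suc i) j f t r"
    using pd_comm[OF assms] by simp
  show "\<And>i j. i + j \<le> k \<Longrightarrow> continuous_on Omega (\<lambda>(t, r). pd (Suc i) j f t r)"
    using smD(1)[OF assms] by simp
  show "\<And>i j t r. i + j \<le> k \<Longrightarrow> r > 0 \<Longrightarrow> ((\<lambda>s. pd (Suc i) j f s r) has_real_derivative pd (Suc (Suc i)) j f t r) (at t)"
    using smD(2)[OF assms] by simp
  show "\<And>i j t r. i + j \<le> k \<Longrightarrow> r > 0 \<Longrightarrow> ((\<lambda>x. pd (Suc i) j f t x) has_real_derivative pd (Suc i) (Suc j) f t r) (at r)"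
    using smD(3)[OF assms] by simp
qed

lemma sm_sym:
  assumes "sm (Suc k) f" "r > 0"
  shows "pd 0 1 (pd_t f) t r = pd 1 0 (pd_r f) t r"
proof -
  have "pd 0 1 (pd_t f) t r = pd 1 1 f t r" using pd_comm[OF assms(1) _ assms(2), of 1 0] by simp
  also have "\<dots> = pd 1 0 (pd_r f) t r" by (simp add: pd_r_pd)
  finally show ?thesis .
qed

fun PP :: "(real \<Rightarrow> real \<Rightarrow> real) \<Rightarrow> (real \<Rightarrow> real \<Rightarrow> real) \<Rightarrow> (real \<Rightarrow> real \<Rightarrow> real) \<Rightarrow> nat \<Rightarrow> nat \<Rightarrow> real \<Rightarrow> real \<Rightarrow> real" where
  "PP f G H 0 0 = f"
| "PP f G H (Suc i) 0 = pd i 0 G"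
| "PP f G H i (Suc j) = pd i j H"

lemma sm_intro_Suc:
  assumes cont: "continuous_on Omega (\<lambda>(t, r). f t r)"
    and dt: "\<And>t r. r > 0 \<Longrightarrow> ((\<lambda>s. f s r) has_real_derivative G t r) (at t)"
    and dr: "\<And>t r. r > 0 \<Longrightarrow> ((\<lambda>x. f t x) has_real_derivative H t r) (at r)"
    and G: "sm k G" and H: "sm k H"
    and sym: "\<And>t r. r > 0 \<Longrightarrow> pd 0 1 G t r = pd 1 0 H t r"
  shows "sm (Suc k) f"
proof (rule sm_from[where P="PP f G H"])
  have eG: "\<And>t r. r > 0 \<Longrightarrow> pd_t f t r = G t r"
    unfolding pd_t_def by (rule DERIV_imp_deriv, rule dt)
  have eH: "\<And>t r. r > 0 \<Longrightarrow> pd_r f t r = H t r"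
    unfolding pd_r_def by (rule DERIV_imp_deriv, rule dr)
  have eq: "pd i j f t r = PP f G H i j t r" if "r > 0" for i j t r
  proof (cases j)
    case 0
    then show ?thesis
    proof (cases i)
      case 0 then show ?thesis using \<open>j = 0\<close> by simp
    next
      case (Suc i')
      have "pd i j f t r = pd i' 0 (pd_t f) t r" using Suc 0 by (simp add: pd_t_pd)
      also have "\<dots> = pd i' 0 G t r" by (rule loc_pd[OF eG that])
      finally show ?thesis using Suc 0 by simp
    qed
  next
    case (Suc j')
    have "pd i j f t r = pd i j' (pd_r f) t r" using Suc by (simp add: pd_r_pd)
    also have "\<dots> = pd i j' H t r" by (rule loc_pd[OF eH that])
    finally show ?thesis using Suc by simp
  qed
  then show "\<And>i j t r. r > 0 \<Longrightarrow> i + j \<le> Suc (Suc k) \<Longrightarrow> pd i j f t r = PP f G H i j t r" by blast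
  have symi: "pd i 1 G t r = pd (Suc i) 0 H t r" if "r > 0" for i t r
  proof -
    have "pd i 1 G t r = pd i 0 (pd 0 1 G) t r" by (simp add: pd_def)
    also have "\<dots> = pd i 0 (pd 1 0 H) t r" by (rule loc_pd[OF sym that])
    also have "\<dots> = pd (Suc i) 0 H t r" by (simp add: pd_def funpow_Suc_right del: funpow.simps)
    finally show ?thesis .
  qed
  fix i j
  assume ij: "i + j \<le> Suc k"
  show "continuous_on Omega (\<lambda>(t, r). PP f G H i j t r)"
  proof (cases j)
    case 0 then show ?thesis using cont smD(1)[OF G, of "i - 1" 0] ij by (cases i) auto
  next
    case (Suc j') then show ?thesis using smD(1)[OF H, of i j'] ij by auto
  qed
  fix t r :: real assume r: "r > 0"
  show "((\<lambda>s. PP f G H i j s r) has_real_derivative PP f G H (Suc i) j t r) (at t)"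
  proof (cases j)
    case 0 then show ?thesis using dt[OF r] smD(2)[OF G, of "i - 1" 0 r t] ij r by (cases i) auto
  next
    case (Suc j') then show ?thesis using smD(2)[OF H, of i j' r t] ij r by auto
  qed
  show "((\<lambda>x. PP f G H i j t x) has_real_derivative PP f G H i (Suc j) t r) (at r)"
  proof (cases j)
    case 0
    then show ?thesis
    proof (cases i)
      case 0 then show ?thesis using dr[OF r] \<open>j = 0\<close> by simp
    next
      case (Suc i')
      then show ?thesis using smD(3)[OF G, of i' 0 r t] ij r symi[OF r, of i'] \<open>j = 0\<close> by auto
    qed
  next
    case (Suc j') then show ?thesis using smD(3)[OF H, of i j' r t] ij r by auto
  qed
qed

lemma sm_intro_0:
  assumes cont: "continuous_on Omega (\<lambda>(t, r). f t r)"
    and dt: "\<And>t r. r > 0 \<Longrightarrow> ((\<lambda>s. f s r) has_real_derivative G t r) (at t)"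
    and dr: "\<And>t r. r > 0 \<Longrightarrow> ((\<lambda>x. f t x) has_real_derivative H t r) (at r)"
  shows "sm 0 f"
proof -
  have eG: "\<And>t r. r > 0 \<Longrightarrow> pd 1 0 f t r = G t r"
    unfolding pd_def pd_t_def by simp (rule DERIV_imp_deriv, rule dt)
  have eH: "\<And>t r. r > 0 \<Longrightarrow> pd 0 1 f t r = H t r"
    unfolding pd_def pd_r_def by simp (rule DERIV_imp_deriv, rule dr)
  show ?thesis unfolding sm_def using cont dt dr eG eH by auto
qed

lemma sm_SucD:
  assumes "sm (Suc k) f" "r > 0"
  shows "((\<lambda>s. f s r) has_real_derivative pd_t f t r) (at t)"
    "((\<lambda>x. f t x) has_real_derivative pd_r f t r) (at r)"
    "((\<lambda>x. pd_t f t x) has_real_derivative pd_t (pd_r f) t r) (at r)"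
    "((\<lambda>s. pd_r f s r) has_real_derivative pd_t (pd_r f) t r) (at t)"
  using smD(2)[OF assms(1), of 0 0 r t] smD(3)[OF assms(1), of 0 0 r t]
    smD(3)[OF assms(1), of 1 0 r t] smD(2)[OF assms(1), of 0 1 r t] assms(2)
  by (auto simp: pd_def)

lemma smooth_sm: "smooth_on2 Omega f \<longleftrightarrow> (\<forall>k. sm k f)"
proof
  assume h: "smooth_on2 Omega f"
  show "\<forall>k. sm k f" unfolding sm_def
  proof (intro allI impI conjI)
    fix k i j :: nat
    show "continuous_on Omega (\<lambda>(t, r). pd i j f t r)" using h by (simp add: smooth_on2_def)
    fix t r :: real assume r: "r > 0"
    have "\<forall>x\<in>Omega. case x of (t, r) \<Rightarrow> ((\<lambda>s. pd i j f s r) has_real_derivative pd (Suc i) j f t r) (at t) \<and>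
          ((\<lambda>x. pd i j f t x) has_real_derivative pd i (Suc j) f t r) (at r)"
      using h by (simp add: smooth_on2_def)
    from bspec[OF this, of "(t, r)"] r
    show "((\<lambda>s. pd i j f s r) has_real_derivative pd (Suc i) j f t r) (at t)"
      "((\<lambda>x. pd i j f t x) has_real_derivative pd i (Suc j) f t r) (at r)" by auto
  qed
next
  assume a: "\<forall>k. sm k f"
  show "smooth_on2 Omega f" unfolding smooth_on2_def
  proof (intro allI conjI ballI)
    fix i j
    have s: "sm (i + j) f" using a by blast
    show "continuous_on Omega (\<lambda>(t, r). pd i j f t r)" using smD(1)[OF s] by simp
    fix x assume "x \<in> Omega"
    then obtain t r where x: "x = (t, r)" "r > 0" by (cases x) auto
    show "case x of (t, r) \<Rightarrow> ((\<lambda>s. pd i j f s r) has_real_derivative pd (Suc i) j f t r) (at t) \<and>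
          ((\<lambda>x. pd i j f t x) has_real_derivative pd i (Suc j) f t r) (at r)"
      using smD(2,3)[OF s order_refl x(2)] x(1) by simp
  qed
qed

lemma pd10_eq: "((\<lambda>s. F s r) has_real_derivative D) (at t) \<Longrightarrow> pd 1 0 F t r = D"
  by (simp add: pd_def pd_t_def DERIV_imp_deriv)
lemma pd01_eq: "((\<lambda>x. F t x) has_real_derivative D) (at r) \<Longrightarrow> pd 0 1 F t r = D"
  by (simp add: pd_def pd_r_def DERIV_imp_deriv)
lemma pd10_def: "pd 1 0 F = pd_t F" by (simp add: pd_def)
lemma pd01_def: "pd 0 1 F = pd_r F" by (simp add: pd_def)

lemma sm_cont: "sm k f \<Longrightarrow> continuous_on Omega (\<lambda>(t, r). f t r)"
  using smD(1)[of k f 0 0] by simp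

lemma sm_dt: "sm k f \<Longrightarrow> r > 0 \<Longrightarrow> ((\<lambda>s. f s r) has_real_derivative pd_t f t r) (at t)"
  using smD(2)[of k f 0 0 r t] by (simp add: pd_def)
lemma sm_dr: "sm k f \<Longrightarrow> r > 0 \<Longrightarrow> ((\<lambda>x. f t x) has_real_derivative pd_r f t r) (at r)"
  using smD(3)[of k f 0 0 r t] by (simp add: pd_def)

lemma cont_mult2:
  fixes f g :: "real \<Rightarrow> real \<Rightarrow> real"
  assumes "continuous_on Omega (\<lambda>(t, r). f t r)" "continuous_on Omega (\<lambda>(t, r). g t r)"
  shows "continuous_on Omega (\<lambda>(t, r). f t r * g t r)"
proof -
  have e: "(\<lambda>(t, r). f t r * g t r) = (\<lambda>x. (case x of (t, r) \<Rightarrow> f t r) * (case x of (t, r) \<Rightarrow> g t r))"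
    by (auto simp: fun_eq_iff)
  show ?thesis unfolding e by (rule continuous_on_mult[OF assms])
qed

lemma cont_add2:
  fixes f g :: "real \<Rightarrow> real \<Rightarrow> real"
  assumes "continuous_on Omega (\<lambda>(t, r). f t r)" "continuous_on Omega (\<lambda>(t, r). g t r)"
  shows "continuous_on Omega (\<lambda>(t, r). f t r + g t r)"
proof -
  have e: "(\<lambda>(t, r). f t r + g t r) = (\<lambda>x. (case x of (t, r) \<Rightarrow> f t r) + (case x of (t, r) \<Rightarrow> g t r))"
    by (auto simp: fun_eq_iff)
  show ?thesis unfolding e by (rule continuous_on_add[OF assms])
qed

lemma der_ps:
  assumes "(f has_real_derivative A) (at x)" "(g has_real_derivative B) (at x)"
    "(p has_real_derivative C) (at x)" "(q has_real_derivative D) (at x)"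
  shows "((\<lambda>y. f y * g y + p y * q y) has_real_derivative (A * g x + f x * B) + (C * q x + p x * D)) (at x)"
  by (rule DERIV_cong[OF DERIV_add[OF DERIV_mult[OF assms(1,2)] DERIV_mult[OF assms(3,4)]]]) (simp add: algebra_simps)

lemma sm_const: "sm k (\<lambda>t r. c)"
proof (induction k arbitrary: c)
  case 0 show ?case
    by (rule sm_intro_0[where G="\<lambda>_ _. 0" and H="\<lambda>_ _. 0"]) (auto intro: continuous_intros)
next
  case (Suc k) show ?case
  proof (rule sm_intro_Suc[where G="\<lambda>_ _. 0" and H="\<lambda>_ _. 0"])
    show "sm k (\<lambda>_ _. 0)" by (rule Suc.IH)
    show "sm k (\<lambda>_ _. 0)" by (rule Suc.IH)
    fix t r :: real assume "r > 0"
    show "pd 0 1 (\<lambda>_ _. 0) t r = pd 1 0 (\<lambda>_ _. 0) t r"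
      by (simp add: pd_def pd_t_def pd_r_def)
  qed (auto intro: continuous_intros)
qed

lemma sm_add: "sm k f \<Longrightarrow> sm k g \<Longrightarrow> sm k (\<lambda>t r. f t r + g t r)"
proof (induction k arbitrary: f g)
  case 0 show ?case
    by (rule sm_intro_0[where G="\<lambda>t r. pd_t f t r + pd_t g t r" and H="\<lambda>t r. pd_r f t r + pd_r g t r"]) (auto intro!: cont_add2[OF sm_cont[OF 0(1)] sm_cont[OF 0(2)]]
        DERIV_add sm_dt[OF 0(1)] sm_dt[OF 0(2)] sm_dr[OF 0(1)] sm_dr[OF 0(2)])
next
  case (Suc k)
  note f = Suc.prems(1) and g = Suc.prems(2)
  show ?case
  proof (rule sm_intro_Suc[where G="\<lambda>t r. pd_t f t r + pd_t g t r" and H="\<lambda>t r. pd_r f t r + pd_r g t r"])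
    show "continuous_on Omega (\<lambda>(t, r). f t r + g t r)" by (rule cont_add2[OF sm_cont[OF f] sm_cont[OF g]])
    show "sm k (\<lambda>t r. pd_t f t r + pd_t g t r)" by (rule Suc.IH[OF sm_deriv_t[OF f] sm_deriv_t[OF g]])
    show "sm k (\<lambda>t r. pd_r f t r + pd_r g t r)" by (rule Suc.IH[OF sm_deriv_r[OF f] sm_deriv_r[OF g]])
    fix t r :: real assume r: "r > 0"
    show "((\<lambda>s. f s r + g s r) has_real_derivative pd_t f t r + pd_t g t r) (at t)"
      by (rule DERIV_add[OF sm_dt[OF f r] sm_dt[OF g r]])
    show "((\<lambda>x. f t x + g t x) has_real_derivative pd_r f t r + pd_r g t r) (at r)"
      by (rule DERIV_add[OF sm_dr[OF f r] sm_dr[OF g r]])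
    have "pd 0 1 (\<lambda>t r. pd_t f t r + pd_t g t r) t r = pd_t (pd_r f) t r + pd_t (pd_r g) t r"
      by (rule pd01_eq, rule DERIV_add[OF sm_SucD(3)[OF f r] sm_SucD(3)[OF g r]])
    also have "\<dots> = pd 1 0 (\<lambda>t r. pd_r f t r + pd_r g t r) t r"
      by (rule pd10_eq[symmetric], rule DERIV_add[OF sm_SucD(4)[OF f r] sm_SucD(4)[OF g r]])
    finally show "pd 0 1 (\<lambda>t r. pd_t f t r + pd_t g t r) t r = pd 1 0 (\<lambda>t r. pd_r f t r + pd_r g t r) t r" .
  qed
qed

lemma sm_mult: "sm k f \<Longrightarrow> sm k g \<Longrightarrow> sm k (\<lambda>t r. f t r * g t r)"
proof (induction k arbitrary: f g)
  case 0 show ?case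
  proof (rule sm_intro_0[where G="\<lambda>t r. pd_t f t r * g t r + f t r * pd_t g t r"
        and H="\<lambda>t r. pd_r f t r * g t r + f t r * pd_r g t r"])
    show "continuous_on Omega (\<lambda>(t, r). f t r * g t r)" by (rule cont_mult2[OF sm_cont[OF 0(1)] sm_cont[OF 0(2)]])
    fix t r :: real assume r: "r > 0"
    show "((\<lambda>s. f s r * g s r) has_real_derivative pd_t f t r * g t r + f t r * pd_t g t r) (at t)"
      using DERIV_mult[OF sm_dt[OF 0(1) r] sm_dt[OF 0(2) r]] by (simp add: algebra_simps)
    show "((\<lambda>x. f t x * g t x) has_real_derivative pd_r f t r * g t r + f t r * pd_r g t r) (at r)"
      using DERIV_mult[OF sm_dr[OF 0(1) r] sm_dr[OF 0(2) r]] by (simp add: algebra_simps)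
  qed
next
  case (Suc k)
  note f = Suc.prems(1) and g = Suc.prems(2)
  have f': "sm k f" and g': "sm k g" using f g sm_mono by auto
  show ?case
  proof (rule sm_intro_Suc[where G="\<lambda>t r. pd_t f t r * g t r + f t r * pd_t g t r"
        and H="\<lambda>t r. pd_r f t r * g t r + f t r * pd_r g t r"])
    show "continuous_on Omega (\<lambda>(t, r). f t r * g t r)" by (rule cont_mult2[OF sm_cont[OF f] sm_cont[OF g]])
    show "sm k (\<lambda>t r. pd_t f t r * g t r + f t r * pd_t g t r)"
      by (rule sm_add[OF Suc.IH[OF sm_deriv_t[OF f] g'] Suc.IH[OF f' sm_deriv_t[OF g]]])
    show "sm k (\<lambda>t r. pd_r f t r * g t r + f t r * pd_r g t r)"
      by (rule sm_add[OF Suc.IH[OF sm_deriv_r[OF f] g'] Suc.IH[OF f' sm_deriv_r[OF g]]])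
    fix t r :: real assume r: "r > 0"
    show "((\<lambda>s. f s r * g s r) has_real_derivative pd_t f t r * g t r + f t r * pd_t g t r) (at t)"
      using DERIV_mult[OF sm_dt[OF f r] sm_dt[OF g r]] by (simp add: algebra_simps)
    show "((\<lambda>x. f t x * g t x) has_real_derivative pd_r f t r * g t r + f t r * pd_r g t r) (at r)"
      using DERIV_mult[OF sm_dr[OF f r] sm_dr[OF g r]] by (simp add: algebra_simps)
    have X: "pd 0 1 (\<lambda>t r. pd_t f t r * g t r + f t r * pd_t g t r) t r =
      (pd_t (pd_r f) t r * g t r + pd_t f t r * pd_r g t r) + (pd_r f t r * pd_t g t r + f t r * pd_t (pd_r g) t r)"
      by (rule pd01_eq, rule der_ps[OF sm_SucD(3)[OF f r, where t=t] sm_dr[OF g r, where t=t] sm_dr[OF f r,where t=t] sm_SucD(3)[OF g r, where t=t]])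
    have Y: "pd 1 0 (\<lambda>t r. pd_r f t r * g t r + f t r * pd_r g t r) t r =
      (pd_t (pd_r f) t r * g t r + pd_r f t r * pd_t g t r) + (pd_t f t r * pd_r g t r + f t r * pd_t (pd_r g) t r)"
      by (rule pd10_eq, rule der_ps[OF sm_SucD(4)[OF f r, where t=t] sm_dt[OF g r, where t=t] sm_dt[OF f r,where t=t] sm_SucD(4)[OF g r, where t=t]])
    show "pd 0 1 (\<lambda>t r. pd_t f t r * g t r + f t r * pd_t g t r) t r =
       pd 1 0 (\<lambda>t r. pd_r f t r * g t r + f t r * pd_r g t r) t r" unfolding X Y by simp
  qed
qed

lemma cont_powr2:
  fixes f :: "real \<Rightarrow> real \<Rightarrow> real"
  assumes "continuous_on Omega (\<lambda>(t, r). f t r)" "\<And>t r. r > 0 \<Longrightarrow> f t r > 0"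
  shows "continuous_on Omega (\<lambda>(t, r). f t r powr q)"
proof -
  have e: "(\<lambda>(t, r). f t r powr q) = (\<lambda>x. (case x of (t, r) \<Rightarrow> f t r) powr q)"
    by (auto simp: fun_eq_iff)
  show ?thesis unfolding e
    by (rule continuous_on_powr[OF assms(1) continuous_on_const]) (auto simp: Omega_def dest!: assms(2)[THEN less_imp_neq])
qed

lemma der_cpm:
  assumes "(a has_real_derivative A) (at x)" "(b has_real_derivative B) (at x)" "a x > 0"
  shows "((\<lambda>y. (q * a y powr (q - 1)) * b y) has_real_derivative
     (q * ((q - 1) * a x powr (q - 1 - 1) * A)) * b x + (q * a x powr (q - 1)) * B) (at x)"
  by (rule DERIV_cong[OF DERIV_mult[OF DERIV_cmult[OF DERIV_fun_powr[OF assms(1,3)]] assms(2)]])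
     (simp add: algebra_simps)

lemma sm_powr: "sm k f \<Longrightarrow> (\<And>t r. r > 0 \<Longrightarrow> f t r > 0) \<Longrightarrow> sm k (\<lambda>t r. f t r powr q)"
proof (induction k arbitrary: q)
  case 0
  note f = 0(1) and pos = 0(2)
  show ?case
  proof (rule sm_intro_0[where G="\<lambda>t r. (q * f t r powr (q - 1)) * pd_t f t r"
        and H="\<lambda>t r. (q * f t r powr (q - 1)) * pd_r f t r"])
    show "continuous_on Omega (\<lambda>(t, r). f t r powr q)" by (rule cont_powr2[OF sm_cont[OF f] pos])
    fix t r :: real assume r: "r > 0"
    show "((\<lambda>s. f s r powr q) has_real_derivative (q * f t r powr (q - 1)) * pd_t f t r) (at t)"
      using DERIV_fun_powr[OF sm_dt[OF f r, where t=t] pos[OF r]] by simp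
    show "((\<lambda>x. f t x powr q) has_real_derivative (q * f t r powr (q - 1)) * pd_r f t r) (at r)"
      using DERIV_fun_powr[OF sm_dr[OF f r, where t=t] pos[OF r]] by simp
  qed
next
  case (Suc k)
  note f = Suc.prems(1) and pos = Suc.prems(2)
  have f': "sm k f" using f sm_mono by auto
  show ?case
  proof (rule sm_intro_Suc[where G="\<lambda>t r. (q * f t r powr (q - 1)) * pd_t f t r"
        and H="\<lambda>t r. (q * f t r powr (q - 1)) * pd_r f t r"])
    show "continuous_on Omega (\<lambda>(t, r). f t r powr q)" by (rule cont_powr2[OF sm_cont[OF f] pos])
    show "sm k (\<lambda>t r. (q * f t r powr (q - 1)) * pd_t f t r)"
      by (rule sm_mult[OF sm_mult[OF sm_const Suc.IH[OF f' pos]] sm_deriv_t[OF f]])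
    show "sm k (\<lambda>t r. (q * f t r powr (q - 1)) * pd_r f t r)"
      by (rule sm_mult[OF sm_mult[OF sm_const Suc.IH[OF f' pos]] sm_deriv_r[OF f]])
    fix t r :: real assume r: "r > 0"
    show "((\<lambda>s. f s r powr q) has_real_derivative (q * f t r powr (q - 1)) * pd_t f t r) (at t)"
      using DERIV_fun_powr[OF sm_dt[OF f r, where t=t] pos[OF r]] by simp
    show "((\<lambda>x. f t x powr q) has_real_derivative (q * f t r powr (q - 1)) * pd_r f t r) (at r)"
      using DERIV_fun_powr[OF sm_dr[OF f r, where t=t] pos[OF r]] by simp
    have X: "pd 0 1 (\<lambda>t r. (q * f t r powr (q - 1)) * pd_t f t r) t r =
      (q * ((q - 1) * f t r powr (q - 1 - 1) * pd_r f t r)) * pd_t f t r + (q * f t r powr (q - 1)) * pd_t (pd_r f) t r"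
      by (rule pd01_eq, rule der_cpm[OF sm_dr[OF f r, where t=t] sm_SucD(3)[OF f r, where t=t] pos[OF r]])
    have Y: "pd 1 0 (\<lambda>t r. (q * f t r powr (q - 1)) * pd_r f t r) t r =
      (q * ((q - 1) * f t r powr (q - 1 - 1) * pd_t f t r)) * pd_r f t r + (q * f t r powr (q - 1)) * pd_t (pd_r f) t r"
      by (rule pd10_eq, rule der_cpm[OF sm_dt[OF f r, where t=t] sm_SucD(4)[OF f r, where t=t] pos[OF r]])
    show "pd 0 1 (\<lambda>t r. (q * f t r powr (q - 1)) * pd_t f t r) t r =
       pd 1 0 (\<lambda>t r. (q * f t r powr (q - 1)) * pd_r f t r) t r" unfolding X Y by simp
  qed
qed

lemma sm_r: "sm k (\<lambda>t r. r)"
proof (induction k)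
  case 0 show ?case
    by (rule sm_intro_0[where G="\<lambda>_ _. 0" and H="\<lambda>_ _. 1"])
       (auto intro!: continuous_intros derivative_eq_intros simp: split_beta)
next
  case (Suc k) show ?case
  proof (rule sm_intro_Suc[where G="\<lambda>_ _. 0" and H="\<lambda>_ _. 1"])
    show "sm k (\<lambda>_ _. 0)" by (rule sm_const)
    show "sm k (\<lambda>_ _. 1)" by (rule sm_const)
    fix t r :: real assume "r > 0"
    show "pd 0 1 (\<lambda>_ _. 0) t r = pd 1 0 (\<lambda>_ _. 1) t r"
      by (simp add: pd_def pd_t_def pd_r_def)
  qed (auto intro!: continuous_intros derivative_eq_intros simp: split_beta)
qed

lemma sm_rpow: "sm k (\<lambda>t r. r powr q)"
  by (rule sm_powr[OF sm_r]) simp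

lemma adm_sm: "admissible u \<Longrightarrow> sm k u"
  unfolding admissible_def smooth_sm by blast

lemma adm_pos: "admissible u \<Longrightarrow> r > 0 \<Longrightarrow> u t r > 0"
  unfolding admissible_def by auto

lemma pdt_exp: "pd_t (\<lambda>t r. exp (r + C)) = (\<lambda>t r. 0)"
  by (simp add: pd_t_def fun_eq_iff)
lemma pdr_exp: "pd_r (\<lambda>t r. exp (r + C)) = (\<lambda>t r. exp (r + C))"
  unfolding pd_r_def fun_eq_iff
  by (auto intro!: DERIV_imp_deriv derivative_eq_intros)
lemma pdt_0: "pd_t (\<lambda>t r. 0) = (\<lambda>t r. 0)"
  by (simp add: pd_t_def fun_eq_iff)

lemma sm_exp: "sm k (\<lambda>t r. exp (r + C))"
proof (induction k)
  case 0 show ?case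
    by (rule sm_intro_0[where G="\<lambda>_ _. 0" and H="\<lambda>t r. exp (r + C)"])
       (auto intro!: continuous_intros derivative_eq_intros simp: split_beta)
next
  case (Suc k) show ?case
  proof (rule sm_intro_Suc[where G="\<lambda>_ _. 0" and H="\<lambda>t r. exp (r + C)"])
    show "sm k (\<lambda>_ _. 0)" by (rule sm_const)
    show "sm k (\<lambda>t r. exp (r + C))" by (rule Suc.IH)
    fix t r :: real assume "r > 0"
    show "pd 0 1 (\<lambda>_ _. 0) t r = pd 1 0 (\<lambda>t r. exp (r + C)) t r"
      by (simp add: pd_def pd_t_def pd_r_def)
  qed (auto intro!: continuous_intros derivative_eq_intros simp: split_beta)
qed

lemma adm_exp: "admissible (\<lambda>t r. exp (r + C))"
  unfolding admissible_def smooth_sm using sm_exp by auto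

lemma pd_exp_vals:
  "pd 2 0 (\<lambda>t r. exp (r + C)) t r = 0"
  "pd 1 0 (\<lambda>t r. exp (r + C)) = (\<lambda>t r. 0)"
  "pd 0 1 (\<lambda>t r. exp (r + C)) = (\<lambda>t r. exp (r + C))"
  "pd 0 2 (\<lambda>t r. exp (r + C)) = (\<lambda>t r. exp (r + C))"
  by (simp_all add: pd_def numeral_2_eq_2 pdt_exp pdr_exp pdt_0)

lemma alg1:
  fixes r :: real
  assumes r: "r > 0" and a: "a = p * b"
  shows "r powr (n - 1) * (utt - (c + b * U) * (urr + (n - 1) / r * ur) - a * V * ur\<^sup>2) =
    r powr (n - 1) * utt - ((n - 1) * r powr (n - 1 - 1) * ((c + b * U) * ur) +
      r powr (n - 1) * ((b * (p * V * ur)) * ur + (c + b * U) * urr))"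
proof -
  have e: "r powr (n - 1 - 1) = r powr (n - 1) / r" using r by (subst powr_diff) simp
  have k: "R * (utt - (c + b * U) * (urr + (n - 1) / r * ur) - p * b * V * ur\<^sup>2) =
    R * utt - ((n - 1) * (R / r) * ((c + b * U) * ur) +
      R * ((b * (p * V * ur)) * ur + (c + b * U) * urr))" for R
    unfolding power2_eq_square using r by (simp add: field_simps)
  show ?thesis unfolding e a by (rule k)
qed

lemma deriv_X:
  assumes u: "admissible u" and r: "r > 0"
  shows "((\<lambda>x. x powr (n - 1) * ((c + b * u t x powr p) * pd 0 1 u t x)) has_real_derivative
    (n - 1) * r powr (n - 1 - 1) * ((c + b * u t r powr p) * pd 0 1 u t r) +
      r powr (n - 1) * ((b * (p * u t r powr (p - 1) * pd 0 1 u t r)) * pd 0 1 u t r + (c + b * u t r powr p) * pd 0 2 u t r)) (at r)"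
proof -
  have s: "sm 2 u" by (rule adm_sm[OF u])
  have du: "((\<lambda>x. u t x) has_real_derivative pd 0 1 u t r) (at r)"
    using smD(3)[OF s, of 0 0 r t] r by simp
  have dur: "((\<lambda>x. pd 0 1 u t x) has_real_derivative pd 0 2 u t r) (at r)"
    using smD(3)[OF s, of 0 1 r t] r by (simp add: numeral_2_eq_2)
  have dR: "((\<lambda>x. x powr (n - 1)) has_real_derivative (n - 1) * r powr (n - 1 - 1)) (at r)"
    by (rule has_real_derivative_powr[OF r])
  have dU: "((\<lambda>x. u t x powr p) has_real_derivative p * u t r powr (p - 1) * pd 0 1 u t r) (at r)"
    using DERIV_fun_powr[OF du adm_pos[OF u r]] by simp
  show ?thesis
    by (rule DERIV_cong[OF DERIV_mult[OF dR DERIV_mult[OF DERIV_add[OF DERIV_const DERIV_cmult[OF dU]] dur]]])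
       (simp add: algebra_simps)
qed

lemma deriv_T:
  assumes u: "admissible u" and r: "r > 0"
  shows "((\<lambda>s. r powr (n - 1) * pd 1 0 u s r) has_real_derivative r powr (n - 1) * pd 2 0 u t r) (at t)"
proof -
  have s: "sm 2 u" by (rule adm_sm[OF u])
  have "((\<lambda>s. pd 1 0 u s r) has_real_derivative pd 2 0 u t r) (at t)"
    using smD(2)[OF s, of 1 0 r t] r by (simp add: numeral_2_eq_2)
  then show ?thesis by (rule DERIV_cmult)
qed

lemma div_easy:
  assumes a: "a = p * b"
  shows "divergence_form n a b c p"
  unfolding divergence_form_def
proof (intro exI[of _ "\<lambda>x y. (c + b * x powr p) * y"] conjI allI impI ballI)
  fix x y :: real assume x: "x > 0"
  have d1: "(\<lambda>z::real \<times> real. fst z powr p) differentiable at (x, y)"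
    by (rule differentiableI, rule has_derivative_powr[OF has_derivative_fst[OF has_derivative_ident] has_derivative_const])
       (use x in auto)
  have d2: "(\<lambda>z::real \<times> real. snd z) differentiable at (x, y)"
    by (rule differentiableI, rule has_derivative_snd[OF has_derivative_ident])
  have "(\<lambda>z::real \<times> real. (c + b * fst z powr p) * snd z) differentiable at (x, y)"
    by (rule differentiable_mult[OF differentiable_add[OF differentiable_const differentiable_mult[OF differentiable_const d1]] d2])
  moreover have "(\<lambda>(x, y). (c + b * x powr p) * y) = (\<lambda>z::real \<times> real. (c + b * fst z powr p) * snd z)"
    by (auto simp: fun_eq_iff)
  ultimately show "(\<lambda>(x, y). (c + b * x powr p) * y) differentiable at (x, y)"
    by simp
next
  fix u :: "real \<Rightarrow> real \<Rightarrow> real" and z assume u: "admissible u" and z: "z \<in> Omega"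
  obtain t r where z': "z = (t, r)" and r: "r > 0" using z by (cases z) auto
  have T: "pd_t (\<lambda>t r. r powr (n - 1) * pd 1 0 u t r) t r = r powr (n - 1) * pd 2 0 u t r"
    unfolding pd_t_def by (rule DERIV_imp_deriv[OF deriv_T[OF u r]])
  have X: "pd_r (\<lambda>t r. r powr (n - 1) * ((c + b * u t r powr p) * pd 0 1 u t r)) t r =
    (n - 1) * r powr (n - 1 - 1) * ((c + b * u t r powr p) * pd 0 1 u t r) +
      r powr (n - 1) * ((b * (p * u t r powr (p - 1) * pd 0 1 u t r)) * pd 0 1 u t r + (c + b * u t r powr p) * pd 0 2 u t r)"
    unfolding pd_r_def by (rule DERIV_imp_deriv[OF deriv_X[OF u r]])
  show "case z of (t, r) \<Rightarrow>
        r powr (n - 1) * Eop n a b c p u t r =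
        pd_t (\<lambda>t r. r powr (n - 1) * pd 1 0 u t r) t r -
        pd_r (\<lambda>t r. r powr (n - 1) * ((c + b * u t r powr p) * pd 0 1 u t r)) t r"
    unfolding z' prod.case T X Eop_def by (rule alg1[OF r a])
qed

lemma kin_easy:
  assumes a: "a = p * b"
  shows "kinematic_cl n a b c p (\<lambda>t r. r powr (n - 1))"
  unfolding kinematic_cl_def
proof (intro conjI)
  show "smooth_on2 Omega (\<lambda>t r. r powr (n - 1))" unfolding smooth_sm using sm_rpow by blast
  show "\<exists>(t, r)\<in>Omega. r powr (n - 1) \<noteq> 0" by (rule bexI[of _ "(0, 1)"]) auto
  define T where "T = (\<lambda>(t::real) (r::real) (J::nat\<Rightarrow>nat\<Rightarrow>real). r powr (n - 1) * J 1 0)"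
  define X where "X = (\<lambda>(t::real) (r::real) (J::nat\<Rightarrow>nat\<Rightarrow>real). (-1) * (r powr (n - 1) * ((c + b * J 0 0 powr p) * J 0 1)))"
  have lT: "local_fun T" unfolding local_fun_def T_def by (rule exI[of _ 1]) auto
  have lX: "local_fun X" unfolding local_fun_def X_def by (rule exI[of _ 1]) auto
  have eT: "eval_df T u = (\<lambda>t r. r powr (n - 1) * pd 1 0 u t r)" for u
    by (simp add: eval_df_def jet_def T_def)
  have eX: "eval_df X u = (\<lambda>t r. (-1) * (r powr (n - 1) * ((c + b * u t r powr p) * pd 0 1 u t r)))" for u
    by (simp add: eval_df_def jet_def X_def)
  have main: "\<forall>u. admissible u \<longrightarrow>
        smooth_on2 Omega (eval_df T u) \<and> smooth_on2 Omega (eval_df X u) \<and>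
        (\<forall>(t, r)\<in>Omega. r powr (n - 1) * Eop n a b c p u t r = pd_t (eval_df T u) t r + pd_r (eval_df X u) t r)"
  proof (intro allI impI conjI ballI)
    fix u assume u: "admissible u"
    show "smooth_on2 Omega (eval_df T u)" unfolding eT smooth_sm pd10_def
      using sm_mult[OF sm_rpow sm_deriv_t[OF adm_sm[OF u]]] by blast
    show "smooth_on2 Omega (eval_df X u)" unfolding eX smooth_sm pd01_def
      using sm_mult[OF sm_const sm_mult[OF sm_rpow sm_mult[OF sm_add[OF sm_const sm_mult[OF sm_const sm_powr[OF adm_sm[OF u] adm_pos[OF u]]]]
        sm_deriv_r[OF adm_sm[OF u]]]]] by blast
    fix z assume z: "z \<in> Omega"
    obtain t r where z': "z = (t, r)" and r: "r > 0" using z by (cases z) auto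
    have T: "pd_t (eval_df T u) t r = r powr (n - 1) * pd 2 0 u t r"
      unfolding pd_t_def eT by (rule DERIV_imp_deriv[OF deriv_T[OF u r]])
    have X: "pd_r (eval_df X u) t r = (-1) * ((n - 1) * r powr (n - 1 - 1) * ((c + b * u t r powr p) * pd 0 1 u t r) +
      r powr (n - 1) * ((b * (p * u t r powr (p - 1) * pd 0 1 u t r)) * pd 0 1 u t r + (c + b * u t r powr p) * pd 0 2 u t r))"
      unfolding pd_r_def eX by (rule DERIV_imp_deriv[OF DERIV_cmult[OF deriv_X[OF u r]]])
    show "case z of (t, r) \<Rightarrow> r powr (n - 1) * Eop n a b c p u t r = pd_t (eval_df T u) t r + pd_r (eval_df X u) t r"
      unfolding z' prod.case T X Eop_def using alg1[OF r a] by simp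
  qed
  show "\<exists>T X. local_fun T \<and> local_fun X \<and>
      (\<forall>u. admissible u \<longrightarrow>
        smooth_on2 Omega (eval_df T u) \<and> smooth_on2 Omega (eval_df X u) \<and>
        (\<forall>(t, r)\<in>Omega. r powr (n - 1) * Eop n a b c p u t r = pd_t (eval_df T u) t r + pd_r (eval_df X u) t r))"
    using lT lX main by blast
qed

lemma lin2:
  fixes X q z W H E :: real
  assumes "X * (1 + q / 1) * z + W = q / 1 * H + E" "X * (1 + q / 2) * z + W = q / 2 * H + E"
  shows "q * (H - X * z) = 0"
proof -
  have "q * (H - X * z) = - 2 * ((X * (1 + q / 1) * z + W - (q / 1 * H + E)) - (X * (1 + q / 2) * z + W - (q / 2 * H + E)))"
    by (simp add: field_simps)
  then show ?thesis using assms by simp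
qed

lemma div_imp:
  assumes n: "n \<noteq> 1" and d: "divergence_form n a b c p"
  shows "a = p * b"
proof -
  obtain F where Fd: "\<forall>x y. x > 0 \<longrightarrow> (\<lambda>(x, y). F x y) differentiable at (x, y)"
    and Fi: "\<forall>u. admissible u \<longrightarrow> (\<forall>(t, r)\<in>Omega. r powr (n - 1) * Eop n a b c p u t r =
      pd_t (\<lambda>t r. r powr (n - 1) * pd 1 0 u t r) t r - pd_r (\<lambda>t r. r powr (n - 1) * F (u t r) (pd 0 1 u t r)) t r)"
    using d unfolding divergence_form_def by blast
  define h where "h z = F z z" for z
  have hd: "(h has_real_derivative deriv h z) (at z)" if z: "z > 0" for z
  proof -
    have "(\<lambda>(x, y). F x y) differentiable at (z, z)" using Fd z by blast
    moreover have "(\<lambda>w::real. (w, w)) differentiable at z"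
      by (rule differentiableI, rule has_derivative_Pair[OF has_derivative_ident has_derivative_ident])
    ultimately have "(\<lambda>w. (\<lambda>(x, y). F x y) (w, w)) differentiable at z"
      using differentiable_compose[of "\<lambda>(x, y). F x y" "\<lambda>w. (w, w)" z UNIV] by simp
    then have "h differentiable at z" by (simp add: h_def[abs_def])
    then show ?thesis by (simp add: DERIV_deriv_iff_real_differentiable)
  qed
  have key: "(c + b * z powr p) * (1 + (n - 1) / r) * z + a * z powr (p - 1) * z\<^sup>2 =
      (n - 1) / r * h z + deriv h z * z" if z: "z > 0" and r: "r > 0" for z r
  proof -
    define C where "C = ln z - r"
    define u where "u = (\<lambda>(t::real) r. exp (r + C))"
    have ez: "exp (r + C) = z" using z by (simp add: C_def)
    have I: "r powr (n - 1) * Eop n a b c p u 0 r =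
      pd_t (\<lambda>t r. r powr (n - 1) * pd 1 0 u t r) 0 r - pd_r (\<lambda>t r. r powr (n - 1) * F (u t r) (pd 0 1 u t r)) 0 r"
      using Fi[rule_format, OF adm_exp[of C], of "(0, r)"] r unfolding u_def by simp
    have P1: "pd_t (\<lambda>t r. r powr (n - 1) * pd 1 0 u t r) 0 r = 0"
      unfolding u_def pd_exp_vals by (simp add: pd_t_def)
    have dd: "((\<lambda>x. x powr (n - 1) * h (exp (x + C))) has_real_derivative
        (n - 1) * r powr (n - 1 - 1) * h z + r powr (n - 1) * (deriv h z * z)) (at r)"
    proof -
      have de: "((\<lambda>x. exp (x + C)) has_real_derivative z) (at r)"
        using ez by (auto intro!: derivative_eq_intros)
      have dh: "((\<lambda>x. h (exp (x + C))) has_real_derivative deriv h z * z) (at r)"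
        using DERIV_chain2[OF hd[OF z, folded ez] de] ez by simp
      show ?thesis
        using DERIV_mult[OF has_real_derivative_powr[OF r, of "n - 1"] dh] ez by (simp add: algebra_simps)
    qed
    have P2: "pd_r (\<lambda>t r. r powr (n - 1) * F (u t r) (pd 0 1 u t r)) 0 r =
        (n - 1) * r powr (n - 1 - 1) * h z + r powr (n - 1) * (deriv h z * z)"
      unfolding u_def pd_exp_vals pd_r_def h_def[symmetric] by (rule DERIV_imp_deriv[OF dd])
    have Ev: "Eop n a b c p u 0 r = 0 - (c + b * z powr p) * (z + (n - 1) / r * z) - a * z powr (p - 1) * z\<^sup>2"
      unfolding Eop_def u_def pd_exp_vals ez by simp
    have e: "r powr (n - 1 - 1) = r powr (n - 1) / r" using r by (subst powr_diff) simp
    have Rpos: "r powr (n - 1) > 0" using r by simp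
    define R where "R = r powr (n - 1)"
    define m where "m = (n - 1) / r"
    have e2: "(n - 1) * r powr (n - 1 - 1) = R * m" unfolding e R_def m_def by simp
    have I2: "R * (0 - (c + b * z powr p) * (z + m * z) - a * z powr (p - 1) * z\<^sup>2) = 0 - (R * m * h z + R * (deriv h z * z))"
      using I unfolding P1 P2 Ev e2 R_def[symmetric] m_def[symmetric] by simp
    then have "R * ((c + b * z powr p) * (1 + m) * z + a * z powr (p - 1) * z\<^sup>2) = R * (m * h z + deriv h z * z)"
      by (simp add: algebra_simps)
    then show ?thesis using Rpos unfolding m_def[symmetric] R_def[symmetric] by simp
  qed
  have hz: "h z = (c + b * z powr p) * z" if z: "z > 0" for z
  proof -
    have "(n - 1) * (h z - (c + b * z powr p) * z) = 0"
      by (rule lin2[OF key[OF z, of 1] key[OF z, of 2]]) auto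
    then show ?thesis using n by simp
  qed
  have dg: "((\<lambda>z. (c + b * z powr p) * z) has_real_derivative c + b + b * p) (at 1)"
    by (rule DERIV_cong[OF DERIV_mult[OF DERIV_add[OF DERIV_const DERIV_cmult[OF has_real_derivative_powr[of 1 p]]] DERIV_ident]])
       (simp_all add: algebra_simps)
  have "((\<lambda>z. (c + b * z powr p) * z) has_real_derivative deriv h 1) (at 1)"
    by (rule has_field_derivative_transform_within_open[OF hd[of 1], of "{0<..}"]) (auto simp: hz)
  then have dh1: "deriv h 1 = c + b + b * p" using DERIV_unique dg by blast
  have "(c + b * 1 powr p) * (1 + (n - 1) / 1) * 1 + a * 1 powr (p - 1) * 1\<^sup>2 = (n - 1) / 1 * h 1 + deriv h 1 * 1"
    by (rule key) auto
  then show ?thesis unfolding dh1 hz[of 1, simplified] by (simp add: algebra_simps)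
qed

fun C1 :: "nat \<Rightarrow> (real \<Rightarrow> real) \<Rightarrow> bool" where
  "C1 0 f = True"
| "C1 (Suc k) f = ((\<forall>x. (f has_real_derivative deriv f x) (at x)) \<and> C1 k (deriv f))"

definition sm1 :: "(real \<Rightarrow> real) \<Rightarrow> bool" where "sm1 f \<longleftrightarrow> (\<forall>k. C1 k f)"

lemma C1_intro:
  assumes "\<And>x. (f has_real_derivative f' x) (at x)" "C1 k f'"
  shows "C1 (Suc k) f"
proof -
  have "deriv f = f'" using assms(1) by (auto intro!: DERIV_imp_deriv)
  then show ?thesis using assms by simp
qed

lemma C1_mono: "C1 (Suc k) f \<Longrightarrow> C1 k f"
proof (induction k arbitrary: f)
  case 0 then show ?case by simp
next
  case (Suc k) then show ?case by auto
qed

lemma C1_const: "C1 k (\<lambda>x. c)"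
proof (induction k arbitrary: c)
  case 0 then show ?case by simp
next
  case (Suc k) show ?case by (rule C1_intro[where f'="\<lambda>x. 0"]) (auto intro: Suc.IH)
qed

lemma C1_add: "C1 k f \<Longrightarrow> C1 k g \<Longrightarrow> C1 k (\<lambda>x. f x + g x)"
proof (induction k arbitrary: f g)
  case 0 then show ?case by simp
next
  case (Suc k)
  show ?case
    by (rule C1_intro[where f'="\<lambda>x. deriv f x + deriv g x"])
       (use Suc in \<open>auto intro!: DERIV_add Suc.IH\<close>)
qed

lemma C1_mult: "C1 k f \<Longrightarrow> C1 k g \<Longrightarrow> C1 k (\<lambda>x. f x * g x)"
proof (induction k arbitrary: f g)
  case 0 then show ?case by simp
next
  case (Suc k)
  have f: "\<And>x. (f has_real_derivative deriv f x) (at x)" "C1 k (deriv f)" "C1 k f"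
    using Suc.prems(1) C1_mono by auto
  have g: "\<And>x. (g has_real_derivative deriv g x) (at x)" "C1 k (deriv g)" "C1 k g"
    using Suc.prems(2) C1_mono by auto
  show ?case
  proof (rule C1_intro[where f'="\<lambda>x. deriv f x * g x + f x * deriv g x"])
    fix x show "((\<lambda>x. f x * g x) has_real_derivative deriv f x * g x + f x * deriv g x) (at x)"
      using DERIV_mult[OF f(1) g(1), of x] by (simp add: algebra_simps)
    show "C1 k (\<lambda>x. deriv f x * g x + f x * deriv g x)"
      by (rule C1_add[OF Suc.IH[OF f(2) g(3)] Suc.IH[OF f(3) g(2)]])
  qed
qed

lemma sm1_const: "sm1 (\<lambda>x. c)" unfolding sm1_def using C1_const by blast
lemma sm1_add: "sm1 f \<Longrightarrow> sm1 g \<Longrightarrow> sm1 (\<lambda>x. f x + g x)" unfolding sm1_def using C1_add by blast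
lemma sm1_mult: "sm1 f \<Longrightarrow> sm1 g \<Longrightarrow> sm1 (\<lambda>x. f x * g x)" unfolding sm1_def using C1_mult by blast
lemma sm1_cmult: "sm1 f \<Longrightarrow> sm1 (\<lambda>x. c * f x)" by (rule sm1_mult[OF sm1_const])

lemma sm1_power: "sm1 f \<Longrightarrow> sm1 (\<lambda>x. f x ^ m)"
proof (induction m)
  case 0 then show ?case by (simp add: sm1_const)
next
  case (Suc m) then show ?case using sm1_mult[of f "\<lambda>x. f x ^ m"] by simp
qed

lemma sm1_der: "sm1 f \<Longrightarrow> (f has_real_derivative deriv f x) (at x)"
  unfolding sm1_def using C1.simps(2) by blast

lemma sm1_deriv: "sm1 f \<Longrightarrow> sm1 (deriv f)"
  unfolding sm1_def using C1.simps(2) by blast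

lemma sm1_intro:
  assumes "\<And>x. (f has_real_derivative f' x) (at x)" "sm1 f'"
  shows "sm1 f"
  unfolding sm1_def
proof
  fix k show "C1 k f"
  proof (cases k)
    case 0 then show ?thesis by simp
  next
    case (Suc k') then show ?thesis using C1_intro[OF assms(1)] assms(2) unfolding sm1_def by blast
  qed
qed

lemma deriv_eq: "(\<And>x. (f has_real_derivative f' x) (at x)) \<Longrightarrow> deriv f = f'"
  by (auto intro!: DERIV_imp_deriv)

lemma sm1_sincos: "C1 k (\<lambda>x. sin (w * x + d)) \<and> C1 k (\<lambda>x. cos (w * x + d))"
proof (induction k arbitrary: d)
  case 0 then show ?case by simp
next
  case (Suc k)
  have d1: "((\<lambda>x. sin (w * x + d)) has_real_derivative w * cos (w * x + d)) (at x)" for x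
    by (auto intro!: derivative_eq_intros)
  have d2: "((\<lambda>x. cos (w * x + d)) has_real_derivative (- w) * sin (w * x + d)) (at x)" for x
    by (auto intro!: derivative_eq_intros)
  show ?case
    by (intro conjI C1_intro[OF d1] C1_intro[OF d2] C1_mult[OF C1_const] conjunct1[OF Suc.IH] conjunct2[OF Suc.IH])
qed

lemma sm1_sin: "sm1 (\<lambda>x. sin (w * x + d))" unfolding sm1_def using sm1_sincos by blast

lemma sm1_exp: "sm1 (\<lambda>x. exp (w * x))"
  unfolding sm1_def
proof
  fix k show "C1 k (\<lambda>x. exp (w * x))"
  proof (induction k)
    case 0 then show ?case by simp
  next
    case (Suc k)
    have d: "((\<lambda>x. exp (w * x)) has_real_derivative w * exp (w * x)) (at x)" for x
      by (auto intro!: derivative_eq_intros)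
    show ?case by (rule C1_intro[OF d C1_mult[OF C1_const Suc.IH]])
  qed
qed

abbreviation Dn :: "nat \<Rightarrow> (real \<Rightarrow> real) \<Rightarrow> real \<Rightarrow> real" where "Dn i f \<equiv> (deriv ^^ i) f"

lemma sm1_Dn: "sm1 f \<Longrightarrow> sm1 (Dn i f)"
  by (induction i) (auto intro: sm1_deriv)

lemma Dn_der: "sm1 f \<Longrightarrow> (Dn i f has_real_derivative Dn (Suc i) f x) (at x)"
  using sm1_der[OF sm1_Dn[of f i]] by simp

lemma sm1_cont: "sm1 f \<Longrightarrow> continuous_on S f"
  by (intro continuous_at_imp_continuous_on ballI DERIV_isCont[OF sm1_der])

lemma Dn_cmult: "sm1 f \<Longrightarrow> Dn i (\<lambda>x. c * f x) = (\<lambda>x. c * Dn i f x)"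
proof (induction i)
  case 0 then show ?case by simp
next
  case (Suc i)
  have "Dn (Suc i) (\<lambda>x. c * f x) = deriv (\<lambda>x. c * Dn i f x)" using Suc by simp
  also have "\<dots> = (\<lambda>x. c * Dn (Suc i) f x)"
    by (rule deriv_eq, rule DERIV_cmult, rule Dn_der[OF Suc.prems])
  finally show ?case .
qed

lemma pd_sep:
  assumes "sm1 Pa" "sm1 Qa" "sm1 Pb" "sm1 Qb"
  shows "pd i j (\<lambda>t r. Pa t * Qa r + Pb t * Qb r) = (\<lambda>t r. Dn i Pa t * Dn j Qa r + Dn i Pb t * Dn j Qb r)"
proof -
  have R: "(pd_r ^^ j) (\<lambda>t r. Pa t * Qa r + Pb t * Qb r) = (\<lambda>t r. Pa t * Dn j Qa r + Pb t * Dn j Qb r)"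
  proof (induction j)
    case 0 then show ?case by simp
  next
    case (Suc j)
    have "(pd_r ^^ Suc j) (\<lambda>t r. Pa t * Qa r + Pb t * Qb r) = pd_r (\<lambda>t r. Pa t * Dn j Qa r + Pb t * Dn j Qb r)"
      using Suc by simp
    also have "\<dots> = (\<lambda>t r. Pa t * Dn (Suc j) Qa r + Pb t * Dn (Suc j) Qb r)"
      unfolding pd_r_def
      by (intro ext DERIV_imp_deriv DERIV_add DERIV_cmult Dn_der assms)
    finally show ?case .
  qed
  have "(pd_t ^^ i) (\<lambda>t r. Pa t * Dn j Qa r + Pb t * Dn j Qb r) = (\<lambda>t r. Dn i Pa t * Dn j Qa r + Dn i Pb t * Dn j Qb r)"
  proof (induction i)
    case 0 then show ?case by simp
  next
    case (Suc i)
    have "(pd_t ^^ Suc i) (\<lambda>t r. Pa t * Dn j Qa r + Pb t * Dn j Qb r) = pd_t (\<lambda>t r. Dn i Pa t * Dn j Qa r + Dn i Pb t * Dn j Qb r)"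
      using Suc by simp
    also have "\<dots> = (\<lambda>t r. Dn (Suc i) Pa t * Dn j Qa r + Dn (Suc i) Pb t * Dn j Qb r)"
      unfolding pd_t_def
      by (intro ext DERIV_imp_deriv DERIV_add DERIV_cmult_right Dn_der assms)
    finally show ?case .
  qed
  then show ?thesis using R by (simp add: pd_def)
qed

lemma smooth_sep:
  assumes "sm1 Pa" "sm1 Qa" "sm1 Pb" "sm1 Qb"
  shows "smooth_on2 Omega (\<lambda>t r. Pa t * Qa r + Pb t * Qb r)"
  unfolding smooth_on2_def pd_sep[OF assms]
proof (intro allI conjI ballI)
  fix i j
  have c: "continuous_on UNIV (Dn k f)" if "sm1 f" for k f by (rule sm1_cont[OF sm1_Dn[OF that]])
  have e: "(\<lambda>(t, r). Dn i Pa t * Dn j Qa r + Dn i Pb t * Dn j Qb r) =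
     (\<lambda>x. Dn i Pa (fst x) * Dn j Qa (snd x) + Dn i Pb (fst x) * Dn j Qb (snd x))" by (auto simp: fun_eq_iff)
  show "continuous_on Omega (\<lambda>(t, r). Dn i Pa t * Dn j Qa r + Dn i Pb t * Dn j Qb r)"
    unfolding e
    by (intro continuous_intros continuous_on_compose2[OF c[OF assms(1)]] continuous_on_compose2[OF c[OF assms(2)]]
        continuous_on_compose2[OF c[OF assms(3)]] continuous_on_compose2[OF c[OF assms(4)]]) auto
  fix x assume "x \<in> Omega"
  obtain t r where x: "x = (t, r)" by (cases x)
  show "case x of (t, r) \<Rightarrow>
      ((\<lambda>s. Dn i Pa s * Dn j Qa r + Dn i Pb s * Dn j Qb r) has_real_derivative Dn (Suc i) Pa t * Dn j Qa r + Dn (Suc i) Pb t * Dn j Qb r) (at t) \<and>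
      ((\<lambda>x. Dn i Pa t * Dn j Qa x + Dn i Pb t * Dn j Qb x) has_real_derivative Dn i Pa t * Dn (Suc j) Qa r + Dn i Pb t * Dn (Suc j) Qb r) (at r)"
    unfolding x prod.case
    by (intro conjI DERIV_add DERIV_cmult DERIV_cmult_right Dn_der assms)
qed

lemma vanish_aux:
  assumes S: "sm1 S" and h: "sm1 h" and j: "j \<le> K"
  shows "\<exists>hj. sm1 hj \<and> Dn j (\<lambda>x. S x ^ K * h x) = (\<lambda>x. S x ^ (K - j) * hj x)"
  using j
proof (induction j)
  case 0 then show ?case using h by auto
next
  case (Suc j)
  then obtain hj where hj: "sm1 hj" "Dn j (\<lambda>x. S x ^ K * h x) = (\<lambda>x. S x ^ (K - j) * hj x)" by auto
  define m where "m = K - Suc j"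
  have m: "K - j = Suc m" "K - Suc j = m" using Suc.prems unfolding m_def by arith+
  define hn where "hn = (\<lambda>x. of_nat (Suc m) * deriv S x * hj x + S x * deriv hj x)"
  have d: "((\<lambda>x. S x ^ Suc m * hj x) has_real_derivative S x ^ m * hn x) (at x)" for x
    by (rule DERIV_cong[OF DERIV_mult[OF DERIV_power[OF sm1_der[OF S]] sm1_der[OF hj(1)]]])
       (simp add: hn_def algebra_simps)
  have "Dn (Suc j) (\<lambda>x. S x ^ K * h x) = deriv (\<lambda>x. S x ^ Suc m * hj x)" using hj m by simp
  also have "\<dots> = (\<lambda>x. S x ^ m * hn x)" by (rule deriv_eq[OF d])
  finally have "Dn (Suc j) (\<lambda>x. S x ^ K * h x) = (\<lambda>x. S x ^ (K - Suc j) * hn x)" using m by simp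
  moreover have "sm1 hn" unfolding hn_def
    by (intro sm1_add sm1_mult sm1_const sm1_deriv S hj(1))
  ultimately show ?case by blast
qed

lemma vanish:
  assumes "sm1 S" "sm1 h" "S x0 = 0" "j < K"
  shows "Dn j (\<lambda>x. S x ^ K * h x) x0 = 0"
proof -
  obtain hj where "Dn j (\<lambda>x. S x ^ K * h x) = (\<lambda>x. S x ^ (K - j) * hj x)"
    using vanish_aux[OF assms(1,2), of j K] assms(4) by auto
  then show ?thesis using assms(3,4) by simp
qed

lemma ibp1:
  fixes f g f' g' :: "real \<Rightarrow> real"
  assumes ab: "a \<le> b"
    and df: "\<And>x. x \<in> {a..b} \<Longrightarrow> (f has_real_derivative f' x) (at x)"
    and dg: "\<And>x. x \<in> {a..b} \<Longrightarrow> (g has_real_derivative g' x) (at x)"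
    and cf: "continuous_on {a..b} f'" and cg: "continuous_on {a..b} g'"
    and ga: "g a = 0" and gb: "g b = 0"
  shows "integral {a..b} (\<lambda>x. f x * g' x) = - integral {a..b} (\<lambda>x. f' x * g x)"
proof -
  have cf0: "continuous_on {a..b} f"
    by (intro continuous_at_imp_continuous_on ballI DERIV_isCont[OF df]) auto
  have cg0: "continuous_on {a..b} g"
    by (intro continuous_at_imp_continuous_on ballI DERIV_isCont[OF dg]) auto
  have int: "(\<lambda>x. f x * g' x) integrable_on {a..b}"
    by (intro integrable_continuous_real continuous_intros cf0 cg)
  have "((\<lambda>x. f' x * g x) has_integral - integral {a..b} (\<lambda>x. f x * g' x)) {a..b}"
  proof (rule integration_by_parts[OF bounded_bilinear_mult ab cf0 cg0])
    show "\<And>x. x \<in> {a..b} \<Longrightarrow> (f has_vector_derivative f' x) (at x)"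
      using df by (simp add: has_real_derivative_iff_has_vector_derivative)
    show "\<And>x. x \<in> {a..b} \<Longrightarrow> (g has_vector_derivative g' x) (at x)"
      using dg by (simp add: has_real_derivative_iff_has_vector_derivative)
    show "((\<lambda>x. f x * g' x) has_integral f b * g b - f a * g a - - integral {a..b} (\<lambda>x. f x * g' x)) {a..b}"
      using int ga gb by (simp add: has_integral_integral)
  qed
  then show ?thesis by (simp add: integral_unique)
qed

lemma ibp2:
  fixes f g f' g' f'' g'' :: "real \<Rightarrow> real"
  assumes ab: "a \<le> b"
    and df: "\<And>x. x \<in> {a..b} \<Longrightarrow> (f has_real_derivative f' x) (at x)"
    and df': "\<And>x. x \<in> {a..b} \<Longrightarrow> (f' has_real_derivative f'' x) (at x)"
    and dg: "\<And>x. x \<in> {a..b} \<Longrightarrow> (g has_real_derivative g' x) (at x)"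
    and dg': "\<And>x. x \<in> {a..b} \<Longrightarrow> (g' has_real_derivative g'' x) (at x)"
    and cf: "continuous_on {a..b} f''" and cg: "continuous_on {a..b} g''"
    and ga: "g a = 0" and gb: "g b = 0" and ga': "g' a = 0" and gb': "g' b = 0"
  shows "integral {a..b} (\<lambda>x. f x * g'' x) = integral {a..b} (\<lambda>x. f'' x * g x)"
proof -
  have cf': "continuous_on {a..b} f'"
    by (intro continuous_at_imp_continuous_on ballI DERIV_isCont[OF df']) auto
  have cg': "continuous_on {a..b} g'"
    by (intro continuous_at_imp_continuous_on ballI DERIV_isCont[OF dg']) auto
  have "integral {a..b} (\<lambda>x. f x * g'' x) = - integral {a..b} (\<lambda>x. f' x * g' x)"
    by (rule ibp1[OF ab df dg' cf' cg ga' gb'])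
  also have "integral {a..b} (\<lambda>x. f' x * g' x) = - integral {a..b} (\<lambda>x. f'' x * g x)"
    by (rule ibp1[OF ab df' dg cf cg' ga gb])
  finally show ?thesis by simp
qed

lemma smooth_der:
  assumes "smooth_on2 Omega f" "r > 0"
  shows "((\<lambda>s. pd i j f s r) has_real_derivative pd (Suc i) j f t r) (at t)"
    "((\<lambda>x. pd i j f t x) has_real_derivative pd i (Suc j) f t r) (at r)"
  using assms unfolding smooth_sm using smD(2,3)[of "i + j" f i j r t] by auto

lemma smooth_cont:
  assumes "smooth_on2 Omega f"
  shows "continuous_on Omega (\<lambda>(t, r). pd i j f t r)"
  using assms unfolding smooth_on2_def by blast

lemma rect_sub: "r0 > 0 \<Longrightarrow> cbox (t0, r0) (t1, r1) \<subseteq> Omega"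
  by (auto simp: cbox_Pair_iff Omega_def)

lemma ftc_r:
  assumes Q: "smooth_on2 Omega Q" and r0: "r0 > 0" and r: "r0 \<le> r1"
  shows "((\<lambda>r. pd_r Q t r) has_integral (Q t r1 - Q t r0)) {r0..r1}"
proof (rule fundamental_theorem_of_calculus[OF r])
  fix x assume x: "x \<in> {r0..r1}"
  then have "x > 0" using r0 by auto
  from smooth_der(2)[OF Q this, of 0 0 t]
  show "((\<lambda>r. Q t r) has_vector_derivative pd_r Q t x) (at x within {r0..r1})"
    by (simp add: has_real_derivative_iff_has_vector_derivative has_vector_derivative_at_within pd_def)
qed

lemma ftc_t:
  assumes P: "smooth_on2 Omega P" and r: "r > 0" and t: "t0 \<le> t1"
  shows "((\<lambda>t. pd_t P t r) has_integral (P t1 r - P t0 r)) {t0..t1}"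
proof (rule fundamental_theorem_of_calculus[OF t])
  fix x assume x: "x \<in> {t0..t1}"
  from smooth_der(1)[OF P r, of 0 0 x]
  show "((\<lambda>t. P t r) has_vector_derivative pd_t P x r) (at x within {t0..t1})"
    by (simp add: has_real_derivative_iff_has_vector_derivative has_vector_derivative_at_within pd_def)
qed

lemma div_int:
  assumes P: "smooth_on2 Omega P" and Q: "smooth_on2 Omega Q"
    and r0: "r0 > 0" and t: "t0 \<le> t1" and r: "r0 \<le> r1"
  shows "integral (cbox (t0, r0) (t1, r1)) (\<lambda>(t, r). pd_t P t r + pd_r Q t r) =
    integral {r0..r1} (\<lambda>r. P t1 r - P t0 r) + integral {t0..t1} (\<lambda>t. Q t r1 - Q t r0)"
proof -
  let ?R = "cbox (t0, r0) (t1, r1)"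
  have cP: "continuous_on ?R (\<lambda>(t, r). pd_t P t r)"
    using continuous_on_subset[OF smooth_cont[OF P, of 1 0] rect_sub[OF r0]] by (simp add: pd_def)
  have cQ: "continuous_on ?R (\<lambda>(t, r). pd_r Q t r)"
    using continuous_on_subset[OF smooth_cont[OF Q, of 0 1] rect_sub[OF r0]] by (simp add: pd_def)
  have e1: "integral ?R (\<lambda>(t, r). pd_t P t r + pd_r Q t r) =
      integral ?R (\<lambda>(t, r). pd_t P t r) + integral ?R (\<lambda>(t, r). pd_r Q t r)"
  proof -
    have "(\<lambda>(t, r). pd_t P t r + pd_r Q t r) = (\<lambda>x. (\<lambda>(t, r). pd_t P t r) x + (\<lambda>(t, r). pd_r Q t r) x)"
      by (auto simp: fun_eq_iff)
    then show ?thesis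
      using integral_add[OF integrable_continuous[OF cP] integrable_continuous[OF cQ]] by simp
  qed
  have eQ: "integral ?R (\<lambda>(t, r). pd_r Q t r) = integral {t0..t1} (\<lambda>t. Q t r1 - Q t r0)"
  proof -
    have "integral ?R (\<lambda>(t, r). pd_r Q t r) = integral (cbox t0 t1) (\<lambda>t. integral (cbox r0 r1) (\<lambda>r. pd_r Q t r))"
      using integral_prod_continuous[OF cQ] by simp
    also have "\<dots> = integral {t0..t1} (\<lambda>t. Q t r1 - Q t r0)"
      unfolding cbox_interval
      by (rule integral_cong) (rule integral_unique[OF ftc_r[OF Q r0 r]])
    finally show ?thesis .
  qed
  have eP: "integral ?R (\<lambda>(t, r). pd_t P t r) = integral {r0..r1} (\<lambda>r. P t1 r - P t0 r)"
  proof -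
    have cP': "continuous_on (cbox (r0, t0) (r1, t1)) (\<lambda>(r, t). pd_t P t r)"
    proof -
      have "(\<lambda>(r, t). pd_t P t r) = (\<lambda>(t, r). pd_t P t r) \<circ> prod.swap" by (auto simp: fun_eq_iff)
      moreover have "prod.swap ` cbox (r0, t0) (r1, t1) = ?R"
        by (simp add: swap_cbox_Pair)
      ultimately show ?thesis
        using continuous_on_compose[OF continuous_on_swap, of "cbox (r0, t0) (r1, t1)" "\<lambda>(t, r). pd_t P t r"] cP
        by metis
    qed
    have "integral ?R (\<lambda>(t, r). pd_t P t r) = integral (cbox (r0, t0) (r1, t1)) (\<lambda>(r, t). pd_t P t r)"
      using integral_swap_2dim[of t0 r0 t1 r1 "\<lambda>t r. pd_t P t r"] cP by simp
    also have "\<dots> = integral (cbox r0 r1) (\<lambda>r. integral (cbox t0 t1) (\<lambda>t. pd_t P t r))"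
      using integral_prod_continuous[OF cP'] by simp
    also have "\<dots> = integral {r0..r1} (\<lambda>r. P t1 r - P t0 r)"
      unfolding cbox_interval
      by (rule integral_cong) (rule integral_unique[OF ftc_t[OF P _ t]], use r0 in auto)
    finally show ?thesis .
  qed
  show ?thesis using e1 eP eQ by simp
qed

definition AA :: "real \<Rightarrow> real \<Rightarrow> nat \<Rightarrow> real \<Rightarrow> real" where
  "AA w x0 K = (\<lambda>x. sin (w * x + - (w * x0)) ^ K * 1)"
definition CC :: "real \<Rightarrow> real \<Rightarrow> nat \<Rightarrow> real \<Rightarrow> real \<Rightarrow> real" where
  "CC w x0 K k = (\<lambda>x. sin (w * x + - (w * x0)) ^ K * exp (k * x))"
definition uu :: "real \<Rightarrow> real \<Rightarrow> (real \<Rightarrow> real) \<Rightarrow> (real \<Rightarrow> real) \<Rightarrow> real \<Rightarrow> real \<Rightarrow> real \<Rightarrow> real" where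
  "uu lam k A C e = (\<lambda>t r. 1 * (lam * exp (k * r)) + e * A t * C r)"

lemma sm1_AA: "sm1 (AA w x0 K)"
  unfolding AA_def by (intro sm1_mult sm1_power sm1_sin sm1_const)
lemma sm1_CC: "sm1 (CC w x0 K k)"
  unfolding CC_def by (intro sm1_mult sm1_power sm1_sin sm1_exp)

lemma sin_bump_zero:
  assumes "w > 0"
  shows "sin (w * x0 + - (w * x0)) = 0" "sin (w * (x0 + pi / w) + - (w * x0)) = 0"
  using assms by (simp_all add: algebra_simps)

lemma AA_vanish:
  assumes "w > 0" "j < K" "x = x0 \<or> x = x0 + pi / w"
  shows "Dn j (AA w x0 K) x = 0"
  unfolding AA_def
  by (rule vanish[OF sm1_sin sm1_const _ assms(2)]) (use assms(3) sin_bump_zero[OF assms(1)] in auto)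

lemma CC_vanish:
  assumes "w > 0" "j < K" "x = x0 \<or> x = x0 + pi / w"
  shows "Dn j (CC w x0 K k) x = 0"
  unfolding CC_def
  by (rule vanish[OF sm1_sin sm1_exp _ assms(2)]) (use assms(3) sin_bump_zero[OF assms(1)] in auto)

lemma pow_sin_le: "\<bar>sin (y::real) ^ K\<bar> \<le> 1"
  unfolding power_abs by (rule power_le_one) (simp_all add: abs_sin_le_one)

lemma AA_bound: "\<bar>AA w x0 K x\<bar> \<le> 1"
  unfolding AA_def using pow_sin_le by simp

lemma CC_bound: "\<bar>CC w x0 K k x\<bar> \<le> exp (k * x)"
proof -
  have "\<bar>sin (w * x + - (w * x0)) ^ K\<bar> \<le> 1" by (rule pow_sin_le)
  then show ?thesis unfolding CC_def by (simp add: abs_mult mult_left_le_one_le)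
qed

lemma uu_pos:
  assumes "\<bar>e\<bar> < lam"
  shows "uu lam k (AA w x0 K) (CC w' x1 K' k) e t r > 0"
proof -
  have "\<bar>AA w x0 K t\<bar> * \<bar>CC w' x1 K' k r\<bar> \<le> 1 * exp (k * r)"
    by (rule mult_mono[OF AA_bound CC_bound]) auto
  then have "\<bar>e\<bar> * (\<bar>AA w x0 K t\<bar> * \<bar>CC w' x1 K' k r\<bar>) \<le> \<bar>e\<bar> * exp (k * r)"
    by (simp add: mult_left_mono)
  then have "\<bar>e * AA w x0 K t * CC w' x1 K' k r\<bar> \<le> \<bar>e\<bar> * exp (k * r)"
    by (simp add: abs_mult mult.assoc)
  also have "\<dots> < lam * exp (k * r)" using assms by simp
  finally show ?thesis unfolding uu_def by simp
qed

lemma pd_uu: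
  assumes "sm1 A" "sm1 C"
  shows "pd i j (uu lam k A C e) = (\<lambda>t r. Dn i (\<lambda>_. 1) t * Dn j (\<lambda>r. lam * exp (k * r)) r + e * Dn i A t * Dn j C r)"
proof -
  have s: "sm1 (\<lambda>r. lam * exp (k * r))" by (intro sm1_cmult sm1_exp)
  have s2: "sm1 (\<lambda>t. e * A t)" by (intro sm1_cmult assms(1))
  show ?thesis unfolding uu_def
    using pd_sep[OF sm1_const[of 1] s s2 assms(2), of i j] Dn_cmult[OF assms(1), of i e]
    by (simp add: mult.assoc)
qed

lemma adm_uu:
  assumes "\<bar>e\<bar> < lam"
  shows "admissible (uu lam k (AA w x0 K) (CC w' x1 K' k) e)"
  unfolding admissible_def
proof
  show "smooth_on2 Omega (uu lam k (AA w x0 K) (CC w' x1 K' k) e)"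
    unfolding uu_def using smooth_sep[OF sm1_const[of 1] sm1_cmult[OF sm1_exp[of k], of lam] sm1_cmult[OF sm1_AA[of w x0 K], of e] sm1_CC[of w' x1 K' k]]
    by (simp add: mult.assoc)
  show "\<forall>(t, r)\<in>Omega. 0 < uu lam k (AA w x0 K) (CC w' x1 K' k) e t r" using uu_pos[OF assms] by auto
qed

lemma jet_uu_eq:
  assumes "Dn i (AA w x0 K) t * Dn j (CC w' x1 K' k) r = 0"
  shows "jet (uu lam k (AA w x0 K) (CC w' x1 K' k) e) t r i j = jet (uu lam k (AA w x0 K) (CC w' x1 K' k) 0) t r i j"
  unfolding jet_def pd_uu[OF sm1_AA sm1_CC] using assms by simp

lemma step1:
  fixes T X :: "real \<Rightarrow> real \<Rightarrow> (nat \<Rightarrow> nat \<Rightarrow> real) \<Rightarrow> real"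
  assumes lT: "\<And>t r J J'. (\<And>i j. i + j \<le> kT \<Longrightarrow> J i j = J' i j) \<Longrightarrow> T t r J = T t r J'"
    and lX: "\<And>t r J J'. (\<And>i j. i + j \<le> kX \<Longrightarrow> J i j = J' i j) \<Longrightarrow> X t r J = X t r J'"
    and id: "\<And>u. admissible u \<Longrightarrow> smooth_on2 Omega (eval_df T u) \<and> smooth_on2 Omega (eval_df X u) \<and>
              (\<forall>(t, r)\<in>Omega. \<alpha> t r * Eop n a b c p u t r = pd_t (eval_df T u) t r + pd_r (eval_df X u) t r)"
    and K: "kT < K" "kX < K" and w: "w > 0" and r0: "r0 > 0" and e: "\<bar>e\<bar> < lam"
  shows "integral (cbox (t0, r0) (t0 + pi / w, r0 + pi / w))
      (\<lambda>(t, r). \<alpha> t r * Eop n a b c p (uu lam k (AA w t0 K) (CC w r0 K k) e) t r) =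
    integral (cbox (t0, r0) (t0 + pi / w, r0 + pi / w))
      (\<lambda>(t, r). \<alpha> t r * Eop n a b c p (uu lam k (AA w t0 K) (CC w r0 K k) 0) t r)"
proof -
  define t1 where "t1 = t0 + pi / w"
  define r1 where "r1 = r0 + pi / w"
  have tt: "t0 \<le> t1" and rr: "r0 \<le> r1" using w by (simp_all add: t1_def r1_def)
  let ?R = "cbox (t0, r0) (t1, r1)"
  let ?u = "\<lambda>e. uu lam k (AA w t0 K) (CC w r0 K k) e"
  define Bd where "Bd u = integral {r0..r1} (\<lambda>r. eval_df T u t1 r - eval_df T u t0 r) +
      integral {t0..t1} (\<lambda>t. eval_df X u t r1 - eval_df X u t r0)" for u
  have main: "integral ?R (\<lambda>(t, r). \<alpha> t r * Eop n a b c p u t r) = Bd u" if u: "admissible u" for u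
  proof -
    note I = id[OF u]
    have "integral ?R (\<lambda>(t, r). \<alpha> t r * Eop n a b c p u t r) =
        integral ?R (\<lambda>(t, r). pd_t (eval_df T u) t r + pd_r (eval_df X u) t r)"
    proof (rule integral_cong)
      fix x assume "x \<in> ?R"
      then have "x \<in> Omega" using rect_sub[OF r0] by blast
      then show "(case x of (t, r) \<Rightarrow> \<alpha> t r * Eop n a b c p u t r) =
          (case x of (t, r) \<Rightarrow> pd_t (eval_df T u) t r + pd_r (eval_df X u) t r)"
        using I by auto
    qed
    also have "\<dots> = Bd u" unfolding Bd_def
      by (rule div_int) (use I r0 tt rr in auto)
    finally show ?thesis .
  qed
  have jT: "eval_df T (?u e) t r = eval_df T (?u 0) t r" if "t = t0 \<or> t = t1" for t r
    unfolding eval_df_def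
  proof (rule lT)
    fix i j assume "i + j \<le> kT"
    then have "i < K" using K by simp
    then have "Dn i (AA w t0 K) t = 0" using AA_vanish[OF w] that by (auto simp: t1_def)
    then show "jet (?u e) t r i j = jet (?u 0) t r i j" by (intro jet_uu_eq) simp
  qed
  have jX: "eval_df X (?u e) t r = eval_df X (?u 0) t r" if "r = r0 \<or> r = r1" for t r
    unfolding eval_df_def
  proof (rule lX)
    fix i j assume "i + j \<le> kX"
    then have "j < K" using K by simp
    then have "Dn j (CC w r0 K k) r = 0" using CC_vanish[OF w] that by (auto simp: r1_def)
    then show "jet (?u e) t r i j = jet (?u 0) t r i j" by (intro jet_uu_eq) simp
  qed
  have "Bd (?u e) = Bd (?u 0)" unfolding Bd_def using jT jX by simp
  moreover have "\<bar>0::real\<bar> < lam" using e by simp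
  ultimately show ?thesis using main[OF adm_uu[OF e]] main[OF adm_uu[of 0 lam]]
    unfolding t1_def r1_def by simp
qed

definition gE :: "real \<Rightarrow> real \<Rightarrow> real \<Rightarrow> real \<Rightarrow> real \<Rightarrow> real \<Rightarrow> real \<Rightarrow> real \<Rightarrow> real \<Rightarrow> real \<Rightarrow> real \<Rightarrow> real \<Rightarrow> real" where
  "gE a b c p U0 G A2C L0 L1 D0 D1 e =
     e * A2C - (c + b * (U0 + e * G) powr p) * (L0 + e * L1) - a * (U0 + e * G) powr (p - 1) * (D0 + e * D1)\<^sup>2"

definition dgE :: "real \<Rightarrow> real \<Rightarrow> real \<Rightarrow> real \<Rightarrow> real \<Rightarrow> real \<Rightarrow> real \<Rightarrow> real \<Rightarrow> real \<Rightarrow> real \<Rightarrow> real \<Rightarrow> real \<Rightarrow> real" where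
  "dgE a b c p U0 G A2C L0 L1 D0 D1 e =
     A2C - (b * (p * (U0 + e * G) powr (p - 1) * G)) * (L0 + e * L1) - (c + b * (U0 + e * G) powr p) * L1
     - a * ((p - 1) * (U0 + e * G) powr (p - 1 - 1) * G) * (D0 + e * D1)\<^sup>2
     - a * (U0 + e * G) powr (p - 1) * (2 * (D0 + e * D1) * D1)"

lemma gE_deriv:
  assumes pos: "U0 + e * G > 0"
  shows "((\<lambda>e. gE a b c p U0 G A2C L0 L1 D0 D1 e) has_real_derivative dgE a b c p U0 G A2C L0 L1 D0 D1 e) (at e)"
proof -
  have dU: "((\<lambda>e. U0 + e * G) has_real_derivative G) (at e)"
    by (auto intro!: derivative_eq_intros)
  have dUp: "((\<lambda>e. (U0 + e * G) powr p) has_real_derivative p * (U0 + e * G) powr (p - 1) * G) (at e)"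
    using DERIV_fun_powr[OF dU pos, of p] by simp
  have dUp1: "((\<lambda>e. (U0 + e * G) powr (p - 1)) has_real_derivative (p - 1) * (U0 + e * G) powr (p - 1 - 1) * G) (at e)"
    using DERIV_fun_powr[OF dU pos, of "p - 1"] by simp
  have dL: "((\<lambda>e. L0 + e * L1) has_real_derivative L1) (at e)"
    by (auto intro!: derivative_eq_intros)
  have dD: "((\<lambda>e. (D0 + e * D1)\<^sup>2) has_real_derivative 2 * (D0 + e * D1) * D1) (at e)"
    by (auto intro!: derivative_eq_intros)
  show ?thesis unfolding gE_def dgE_def
    by (rule DERIV_cong[OF DERIV_diff[OF DERIV_diff[OF DERIV_cmult_right[OF DERIV_ident]
          DERIV_mult[OF DERIV_add[OF DERIV_const DERIV_cmult[OF dUp]] dL]] DERIV_mult[OF DERIV_cmult[OF dUp1] dD]]])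
       (simp add: algebra_simps)
qed

lemma Dn_one: "Dn (Suc i) (\<lambda>_. 1) = (\<lambda>_. 0)"
proof (induction i)
  case 0 then show ?case by (simp add: fun_eq_iff)
next
  case (Suc i)
  have "deriv (Dn i (\<lambda>_. 1::real)) = (\<lambda>_. 0)" using Suc.IH by simp
  then show ?case by simp
qed

lemma Dn_exp1: "Dn 1 (\<lambda>r. lam * exp (k * r)) = (\<lambda>r. lam * (k * exp (k * r)))"
  by (simp, rule deriv_eq) (auto intro!: derivative_eq_intros)

lemma Dn_exp2: "Dn 2 (\<lambda>r. lam * exp (k * r)) = (\<lambda>r. lam * (k * (k * exp (k * r))))"
proof -
  have "Dn 2 (\<lambda>r. lam * exp (k * r)) = deriv (Dn 1 (\<lambda>r. lam * exp (k * r)))" by (simp add: numeral_2_eq_2)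
  also have "\<dots> = (\<lambda>r. lam * (k * (k * exp (k * r))))" unfolding Dn_exp1
    by (rule deriv_eq) (auto intro!: derivative_eq_intros)
  finally show ?thesis .
qed

lemma Eop_uu:
  assumes "sm1 A" "sm1 C"
  shows "Eop n a b c p (uu lam k A C e) t r =
    gE a b c p (lam * exp (k * r)) (A t * C r) (Dn 2 A t * C r)
      (lam * (k * (k * exp (k * r))) + (n - 1) / r * (lam * (k * exp (k * r))))
      (A t * Dn 2 C r + (n - 1) / r * (A t * Dn 1 C r))
      (lam * (k * exp (k * r))) (A t * Dn 1 C r) e"
proof -
  have d1: "Dn 1 (\<lambda>_::real. 1::real) = (\<lambda>_. 0)" using Dn_one[of 0] by simp
  have d2: "Dn 2 (\<lambda>_::real. 1::real) = (\<lambda>_. 0)" using Dn_one[of 1] by (simp add: numeral_2_eq_2)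
  have u: "uu lam k A C e t r = lam * exp (k * r) + e * (A t * C r)" by (simp add: uu_def)
  show ?thesis
    unfolding Eop_def gE_def pd_uu[OF assms] d1 d2 Dn_exp1 Dn_exp2 u
    by (simp add: algebra_simps)
qed

lemma cont_gE:
  fixes U0f Gf A2Cf L0f L1f D0f D1f ef :: "'x::topological_space \<Rightarrow> real"
  assumes "continuous_on S U0f" "continuous_on S Gf" "continuous_on S A2Cf" "continuous_on S L0f"
    "continuous_on S L1f" "continuous_on S D0f" "continuous_on S D1f" "continuous_on S ef"
    and pos: "\<And>x. x \<in> S \<Longrightarrow> U0f x + ef x * Gf x > 0"
  shows "continuous_on S (\<lambda>x. gE a b c p (U0f x) (Gf x) (A2Cf x) (L0f x) (L1f x) (D0f x) (D1f x) (ef x))"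
    "continuous_on S (\<lambda>x. dgE a b c p (U0f x) (Gf x) (A2Cf x) (L0f x) (L1f x) (D0f x) (D1f x) (ef x))"
  unfolding gE_def dgE_def
  by (intro continuous_intros assms; use pos in \<open>force\<close>)+

lemma cont_t: "continuous_on UNIV f \<Longrightarrow> continuous_on S (\<lambda>x::real \<times> real \<times> real. f (fst (snd x)))"
  by (rule continuous_on_compose2[of UNIV f]) (auto intro!: continuous_on_fst continuous_on_snd continuous_on_id)
lemma cont_r: "continuous_on UNIV f \<Longrightarrow> continuous_on S (\<lambda>x::real \<times> real \<times> real. f (snd (snd x)))"
  by (rule continuous_on_compose2[of UNIV f]) (auto intro!: continuous_on_fst continuous_on_snd continuous_on_id)
lemma cont_e: "continuous_on S (\<lambda>x::real \<times> real \<times> real. fst x)"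
  by (auto intro!: continuous_on_fst continuous_on_id)

lemma cont_alpha:
  assumes "continuous_on Omega (\<lambda>(t, r). \<alpha> t r)" "snd ` S \<subseteq> Omega"
  shows "continuous_on S (\<lambda>x::real \<times> real \<times> real. \<alpha> (fst (snd x)) (snd (snd x)))"
proof -
  have "continuous_on S ((\<lambda>(t, r). \<alpha> t r) \<circ> snd)"
    by (rule continuous_on_compose[OF continuous_on_snd[OF continuous_on_id] continuous_on_subset[OF assms(1) assms(2)]])
  then show ?thesis by (simp add: o_def split_beta)
qed

lemma cont_sm1: "sm1 f \<Longrightarrow> continuous_on UNIV (Dn i f)"
  by (rule sm1_cont[OF sm1_Dn])

definition FE where
  "FE a b c p n lam k A C e t r = gE a b c p (lam * exp (k * r)) (A t * C r) (Dn 2 A t * C r)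
      (lam * (k * (k * exp (k * r))) + (n - 1) / r * (lam * (k * exp (k * r))))
      (A t * Dn 2 C r + (n - 1) / r * (A t * Dn 1 C r))
      (lam * (k * exp (k * r))) (A t * Dn 1 C r) e"
definition DFE where
  "DFE a b c p n lam k A C e t r = dgE a b c p (lam * exp (k * r)) (A t * C r) (Dn 2 A t * C r)
      (lam * (k * (k * exp (k * r))) + (n - 1) / r * (lam * (k * exp (k * r))))
      (A t * Dn 2 C r + (n - 1) / r * (A t * Dn 1 C r))
      (lam * (k * exp (k * r))) (A t * Dn 1 C r) e"

lemma step2:
  fixes \<alpha> :: "real \<Rightarrow> real \<Rightarrow> real"
  assumes ca: "continuous_on Omega (\<lambda>(t, r). \<alpha> t r)"
    and const: "\<And>e. \<bar>e\<bar> < lam \<Longrightarrow>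
      integral (cbox (t0, r0) (t1, r1)) (\<lambda>(t, r). \<alpha> t r * Eop n a b c p (uu lam k (AA w t0' K) (CC w' r0' K' k) e) t r) =
      integral (cbox (t0, r0) (t1, r1)) (\<lambda>(t, r). \<alpha> t r * Eop n a b c p (uu lam k (AA w t0' K) (CC w' r0' K' k) 0) t r)"
    and lam: "lam > 0" and r0: "r0 > 0"
  shows "integral (cbox (t0, r0) (t1, r1)) (\<lambda>(t, r). \<alpha> t r * DFE a b c p n lam k (AA w t0' K) (CC w' r0' K' k) 0 t r) = 0"
proof -
  define A where "A = AA w t0' K"
  define C where "C = CC w' r0' K' k"
  let ?R = "cbox (t0, r0) (t1, r1)"
  define U where "U = {- (lam / 2) .. lam / 2}"
  have pos: "lam * exp (k * r) + e * (A t * C r) > 0" if "\<bar>e\<bar> < lam" for e t r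
    using uu_pos[OF that, of k w t0' K w' r0' K' t r] by (simp add: uu_def A_def C_def mult.assoc)
  have posU: "lam * exp (k * r) + e * (A t * C r) > 0" if "e \<in> U" for e t r
    using that lam by (intro pos) (auto simp: U_def)
  have FEq: "\<alpha> t r * Eop n a b c p (uu lam k A C e) t r = \<alpha> t r * FE a b c p n lam k A C e t r" for e t r
    unfolding FE_def A_def C_def by (simp add: Eop_uu[OF sm1_AA sm1_CC])
  have FEq': "Eop n a b c p (uu lam k (AA w t0' K) (CC w' r0' K' k) e) t r = FE a b c p n lam k (AA w t0' K) (CC w' r0' K' k) e t r" for e t r
    unfolding FE_def by (rule Eop_uu[OF sm1_AA sm1_CC])
  define f where "f e = (\<lambda>(t, r). \<alpha> t r * FE a b c p n lam k A C e t r)" for e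
  define fx where "fx e = (\<lambda>(t, r). \<alpha> t r * DFE a b c p n lam k A C e t r)" for e
  have eq: "integral ?R (f e) = integral ?R (f 0)" if "e \<in> U" for e
  proof -
    have "\<bar>e\<bar> < lam" using that lam by (auto simp: U_def)
    moreover have fe: "f e' = (\<lambda>(t, r). \<alpha> t r * Eop n a b c p (uu lam k (AA w t0' K) (CC w' r0' K' k) e') t r)" for e'
      unfolding f_def A_def C_def by (simp add: FEq')
    ultimately show ?thesis using const[of e] by (simp add: fe)
  qed
  have sR: "snd ` (U \<times> ?R) \<subseteq> Omega" using rect_sub[OF r0] by auto
  have r_pos: "y \<in> U \<times> ?R \<Longrightarrow> snd (snd y) \<noteq> 0" for y
    using r0 by (auto simp: cbox_Pair_iff)
  have cA: "continuous_on UNIV (Dn i A)" for i unfolding A_def by (rule cont_sm1[OF sm1_AA])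
  have cC: "continuous_on UNIV (Dn i C)" for i unfolding C_def by (rule cont_sm1[OF sm1_CC])
  have cA0: "continuous_on UNIV A" using cA[of 0] by simp
  have cC0: "continuous_on UNIV C" using cC[of 0] by simp
  have cont_f: "continuous_on (U \<times> ?R) (\<lambda>y. f (fst y) (snd y))"
  proof -
    have e: "(\<lambda>y. f (fst y) (snd y)) = (\<lambda>y. \<alpha> (fst (snd y)) (snd (snd y)) * gE a b c p (lam * exp (k * snd (snd y))) (A (fst (snd y)) * C (snd (snd y))) (Dn 2 A (fst (snd y)) * C (snd (snd y)))
      (lam * (k * (k * exp (k * snd (snd y)))) + (n - 1) / snd (snd y) * (lam * (k * exp (k * snd (snd y)))))
      (A (fst (snd y)) * Dn 2 C (snd (snd y)) + (n - 1) / snd (snd y) * (A (fst (snd y)) * Dn 1 C (snd (snd y))))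
      (lam * (k * exp (k * snd (snd y)))) (A (fst (snd y)) * Dn 1 C (snd (snd y))) (fst y))"
      by (auto simp: fun_eq_iff f_def FE_def split_beta)
    show ?thesis unfolding e
      by (intro continuous_on_mult cont_alpha[OF ca sR] cont_gE(1) continuous_intros
          cont_t[OF cA0] cont_t[OF cA] cont_r[OF cC0] cont_r[OF cC] cont_e)
         (auto simp: r_pos posU)
  qed
  have cont_fx: "continuous_on (U \<times> ?R) (\<lambda>(e, x). fx e x)"
  proof -
    have e: "(\<lambda>(e, x). fx e x) = (\<lambda>y. \<alpha> (fst (snd y)) (snd (snd y)) * dgE a b c p (lam * exp (k * snd (snd y))) (A (fst (snd y)) * C (snd (snd y))) (Dn 2 A (fst (snd y)) * C (snd (snd y)))
      (lam * (k * (k * exp (k * snd (snd y)))) + (n - 1) / snd (snd y) * (lam * (k * exp (k * snd (snd y)))))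
      (A (fst (snd y)) * Dn 2 C (snd (snd y)) + (n - 1) / snd (snd y) * (A (fst (snd y)) * Dn 1 C (snd (snd y))))
      (lam * (k * exp (k * snd (snd y)))) (A (fst (snd y)) * Dn 1 C (snd (snd y))) (fst y))"
      by (auto simp: fun_eq_iff fx_def DFE_def split_beta)
    show ?thesis unfolding e
      by (intro continuous_on_mult cont_alpha[OF ca sR] cont_gE(2) continuous_intros
          cont_t[OF cA0] cont_t[OF cA] cont_r[OF cC0] cont_r[OF cC] cont_e)
         (auto simp: r_pos posU)
  qed
  have int: "f e integrable_on ?R" if "e \<in> U" for e
  proof -
    have "continuous_on ?R ((\<lambda>y. f (fst y) (snd y)) \<circ> (\<lambda>x. (e, x)))"
      by (rule continuous_on_compose[OF _ continuous_on_subset[OF cont_f]]) (auto intro!: continuous_intros simp: that)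
    then show ?thesis by (intro integrable_continuous) (simp add: o_def)
  qed
  have der: "((\<lambda>e. f e x) has_field_derivative fx e x) (at e within U)" if "e \<in> U" "x \<in> ?R" for e x
  proof -
    obtain t r where x: "x = (t, r)" by (cases x)
    show ?thesis unfolding x f_def fx_def prod.case FE_def DFE_def
      by (rule has_field_derivative_at_within, rule DERIV_cmult, rule gE_deriv) (use posU[OF that(1)] in simp)
  qed
  have U0: "0 \<in> U" and Uc: "convex U" using lam by (auto simp: U_def)
  have L: "((\<lambda>e. integral ?R (f e)) has_field_derivative integral ?R (fx 0)) (at 0 within U)"
    by (rule leibniz_rule_field_derivative[OF der int cont_fx U0 Uc])
  have int0: "0 \<in> interior U" using lam by (simp add: U_def)
  have L': "((\<lambda>e. integral ?R (f e)) has_field_derivative integral ?R (fx 0)) (at 0)"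
    using L at_within_interior[OF int0] by simp
  have C0: "((\<lambda>e. integral ?R (f e)) has_field_derivative 0) (at 0)"
  proof (rule has_field_derivative_transform_within_open[OF DERIV_const, of "interior U"])
    show "open (interior U)" by simp
    show "0 \<in> interior U" by (rule int0)
    fix e assume "e \<in> interior U"
    then have "e \<in> U" using interior_subset by blast
    then show "integral ?R (f 0) = integral ?R (f e)" using eq by simp
  qed
  have "integral ?R (fx 0) = 0" using DERIV_unique[OF L' C0] .
  then show ?thesis unfolding fx_def A_def C_def .
qed

lemma iter_r:
  fixes F :: "real \<Rightarrow> real \<Rightarrow> real"
  assumes "continuous_on (cbox (t0, r0) (t1, r1)) (\<lambda>(t, r). F t r)"
  shows "integral (cbox (t0, r0) (t1, r1)) (\<lambda>(t, r). F t r) = integral {t0..t1} (\<lambda>t. integral {r0..r1} (\<lambda>r. F t r))"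
  using integral_prod_continuous[OF assms] by (simp add: cbox_interval)

lemma iter_t:
  fixes F :: "real \<Rightarrow> real \<Rightarrow> real"
  assumes c: "continuous_on (cbox (t0, r0) (t1, r1)) (\<lambda>(t, r). F t r)"
  shows "integral (cbox (t0, r0) (t1, r1)) (\<lambda>(t, r). F t r) = integral {r0..r1} (\<lambda>r. integral {t0..t1} (\<lambda>t. F t r))"
proof -
  have c': "continuous_on (cbox (r0, t0) (r1, t1)) (\<lambda>(r, t). F t r)"
  proof -
    have "(\<lambda>(r, t). F t r) = (\<lambda>(t, r). F t r) \<circ> prod.swap" by (auto simp: fun_eq_iff)
    moreover have "prod.swap ` cbox (r0, t0) (r1, t1) = cbox (t0, r0) (t1, r1)"
      by (simp add: swap_cbox_Pair)
    ultimately show ?thesis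
      using continuous_on_compose[OF continuous_on_swap, of "cbox (r0, t0) (r1, t1)" "\<lambda>(t, r). F t r"] c
      by metis
  qed
  have "integral (cbox (t0, r0) (t1, r1)) (\<lambda>(t, r). F t r) = integral (cbox (r0, t0) (r1, t1)) (\<lambda>(r, t). F t r)"
    using integral_swap_2dim[of t0 r0 t1 r1 "\<lambda>t r. F t r"] c by simp
  also have "\<dots> = integral {r0..r1} (\<lambda>r. integral {t0..t1} (\<lambda>t. F t r))"
    using integral_prod_continuous[OF c'] by (simp add: cbox_interval)
  finally show ?thesis .
qed

lemma slice_r:
  fixes F :: "real \<Rightarrow> real \<Rightarrow> real"
  assumes "continuous_on (cbox (t0, r0) (t1, r1)) (\<lambda>(t, r). F t r)" "t \<in> {t0..t1}"
  shows "continuous_on {r0..r1} (\<lambda>r. F t r)"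
proof -
  have "continuous_on {r0..r1} ((\<lambda>(t, r). F t r) \<circ> (\<lambda>r. (t, r)))"
    by (rule continuous_on_compose[OF _ continuous_on_subset[OF assms(1)]])
       (use assms(2) in \<open>auto intro!: continuous_intros simp: cbox_Pair_iff cbox_interval\<close>)
  then show ?thesis by (simp add: o_def)
qed

lemma slice_t:
  fixes F :: "real \<Rightarrow> real \<Rightarrow> real"
  assumes "continuous_on (cbox (t0, r0) (t1, r1)) (\<lambda>(t, r). F t r)" "r \<in> {r0..r1}"
  shows "continuous_on {t0..t1} (\<lambda>t. F t r)"
proof -
  have "continuous_on {t0..t1} ((\<lambda>(t, r). F t r) \<circ> (\<lambda>t. (t, r)))"
    by (rule continuous_on_compose[OF _ continuous_on_subset[OF assms(1)]])
       (use assms(2) in \<open>auto intro!: continuous_intros simp: cbox_Pair_iff cbox_interval\<close>)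
  then show ?thesis by (simp add: o_def)
qed

lemma cont2_t: "continuous_on UNIV f \<Longrightarrow> continuous_on S (\<lambda>x::real \<times> real. f (fst x))"
  by (rule continuous_on_compose2[of UNIV f]) (auto intro!: continuous_on_fst continuous_on_id)
lemma cont2_r: "continuous_on UNIV f \<Longrightarrow> continuous_on S (\<lambda>x::real \<times> real. f (snd x))"
  by (rule continuous_on_compose2[of UNIV f]) (auto intro!: continuous_on_snd continuous_on_id)
lemma cont2_alpha:
  assumes "continuous_on Omega (\<lambda>(t, r). g t r)" "S \<subseteq> Omega"
  shows "continuous_on S (\<lambda>x. g (fst x) (snd x))"
  using continuous_on_subset[OF assms] by (simp add: split_beta)

lemma integral_add2:
  fixes f g :: "real \<times> real \<Rightarrow> real"
  assumes "continuous_on (cbox u v) f" "continuous_on (cbox u v) g"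
  shows "integral (cbox u v) (\<lambda>x. f x + g x) = integral (cbox u v) f + integral (cbox u v) g"
  by (rule integral_add[OF integrable_continuous[OF assms(1)] integrable_continuous[OF assms(2)]])

definition VV :: "real \<Rightarrow> real \<Rightarrow> real \<Rightarrow> real \<Rightarrow> real" where
  "VV lam p k r = lam powr p * exp (p * k * r)"

definition Phi :: "(real \<Rightarrow> real \<Rightarrow> real) \<Rightarrow> real \<Rightarrow> real \<Rightarrow> real \<Rightarrow> real \<Rightarrow> real \<Rightarrow> real \<Rightarrow> real \<Rightarrow> real \<Rightarrow> real \<Rightarrow> real" where
  "Phi \<alpha> a b c p n lam k t r =
     pd 2 0 \<alpha> t r - c * pd 0 2 \<alpha> t r + c * (- (n - 1) / r\<^sup>2 * \<alpha> t r + (n - 1) / r * pd 0 1 \<alpha> t r)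
     + VV lam p k r * (b * (- pd 0 2 \<alpha> t r + (n - 1) / r * pd 0 1 \<alpha> t r + (- (n - 1) / r\<^sup>2) * \<alpha> t r)
        + 2 * k * (a - b * p) * pd 0 1 \<alpha> t r + k\<^sup>2 * (a - b * p) * (p + 1) * \<alpha> t r)"

lemma VV_der: "((\<lambda>x. VV lam p k x) has_real_derivative p * k * VV lam p k r) (at r)"
  unfolding VV_def by (auto intro!: derivative_eq_intros simp: algebra_simps)

lemma cont_VV: "continuous_on S (\<lambda>x. VV lam p k x)"
  unfolding VV_def by (intro continuous_intros)

lemma U0_powr:
  assumes "lam > 0"
  shows "(lam * exp (k * r)) powr p = VV lam p k r"
    "(lam * exp (k * r)) powr (p - 1) = VV lam p k r / (lam * exp (k * r))"
    "(lam * exp (k * r)) powr (p - 1 - 1) = VV lam p k r / (lam * exp (k * r))\<^sup>2"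
proof -
  show 0: "(lam * exp (k * r)) powr p = VV lam p k r"
    unfolding VV_def using assms by (simp add: powr_mult exp_powr_real algebra_simps)
  have pos: "lam * exp (k * r) > 0" using assms by simp
  show "(lam * exp (k * r)) powr (p - 1) = VV lam p k r / (lam * exp (k * r))"
    using pos by (simp add: powr_diff 0)
  show "(lam * exp (k * r)) powr (p - 1 - 1) = VV lam p k r / (lam * exp (k * r))\<^sup>2"
    using pos by (simp add: powr_diff 0 power2_eq_square)
qed

lemma smooth_cont_r:
  assumes "smooth_on2 Omega f" "r0 > 0"
  shows "continuous_on {r0..r1} (\<lambda>r. pd i j f t r)"
proof -
  have "continuous_on {r0..r1} ((\<lambda>(t, r). pd i j f t r) \<circ> (\<lambda>r. (t, r)))"
    by (rule continuous_on_compose[OF _ continuous_on_subset[OF smooth_cont[OF assms(1)]]])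
       (use assms(2) in \<open>auto intro!: continuous_intros\<close>)
  then show ?thesis by (simp add: o_def)
qed

lemma smooth_cont_t:
  assumes "smooth_on2 Omega f" "r > 0"
  shows "continuous_on S (\<lambda>t. pd i j f t r)"
proof -
  have "continuous_on S ((\<lambda>(t, r). pd i j f t r) \<circ> (\<lambda>t. (t, r)))"
    by (rule continuous_on_compose[OF _ continuous_on_subset[OF smooth_cont[OF assms(1)]]])
       (use assms(2) in \<open>auto intro!: continuous_intros\<close>)
  then show ?thesis by (simp add: o_def)
qed

lemma smooth_cont2:
  assumes "smooth_on2 Omega f" "S \<subseteq> Omega"
  shows "continuous_on S (\<lambda>x. pd i j f (fst x) (snd x))"
  by (rule cont2_alpha[OF smooth_cont[OF assms(1)] assms(2)])

lemma cont2_m: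
  assumes "\<And>x. x \<in> S \<Longrightarrow> snd x > (0::real)"
  shows "continuous_on S (\<lambda>x::real \<times> real. (n - 1) / snd x)"
    "continuous_on S (\<lambda>x::real \<times> real. - (n - 1) / (snd x)\<^sup>2)"
  using assms by (auto intro!: continuous_intros) (metis less_irrefl snd_conv)+

lemma step3:
  fixes \<alpha> :: "real \<Rightarrow> real \<Rightarrow> real"
  assumes sa: "smooth_on2 Omega \<alpha>" and r0: "r0 > 0" and w: "w > 0" and K: "2 \<le> K" and lam: "lam > 0"
  shows "integral (cbox (t0, r0) (t0 + pi / w, r0 + pi / w)) (\<lambda>(t, r). \<alpha> t r * DFE a b c p n lam k (AA w t0 K) (CC w r0 K k) 0 t r)
       = integral (cbox (t0, r0) (t0 + pi / w, r0 + pi / w)) (\<lambda>(t, r). Phi \<alpha> a b c p n lam k t r * (AA w t0 K t * CC w r0 K k r))"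
proof -
  define A where "A = AA w t0 K"
  define C where "C = CC w r0 K k"
  define t1 where "t1 = t0 + pi / w"
  define r1 where "r1 = r0 + pi / w"
  have tt: "t0 \<le> t1" and rr: "r0 \<le> r1" using w by (simp_all add: t1_def r1_def)
  let ?R = "cbox (t0, r0) (t1, r1)"
  have Rsub: "?R \<subseteq> Omega" by (rule rect_sub[OF r0])
  have Rpos: "\<And>x. x \<in> ?R \<Longrightarrow> snd x > 0" using Rsub by (auto simp: Omega_def)
  define V where "V r = VV lam p k r" for r
  define m where "m r = (n - 1) / r" for r
  define mp where "mp r = - (n - 1) / r\<^sup>2" for r
  define F1 where "F1 t r = \<alpha> t r * (c + b * V r)" for t r
  define F1d where "F1d t r = pd 0 1 \<alpha> t r * (c + b * V r) + \<alpha> t r * (b * (p * k * V r))" for t r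
  define F1dd where "F1dd t r = pd 0 2 \<alpha> t r * (c + b * V r) + 2 * (pd 0 1 \<alpha> t r * (b * (p * k * V r))) + \<alpha> t r * (b * (p * k * (p * k * V r)))" for t r
  define W where "W r = c * m r + b * m r * V r + 2 * a * k * V r" for r
  define Wd where "Wd r = c * mp r + b * (mp r * V r + m r * (p * k * V r)) + 2 * a * k * (p * k * V r)" for r
  define G1 where "G1 t r = \<alpha> t r * W r" for t r
  define G1d where "G1d t r = pd 0 1 \<alpha> t r * W r + \<alpha> t r * Wd r" for t r
  define H where "H t r = \<alpha> t r * (b * p * V r * (k\<^sup>2 + m r * k) + a * (p - 1) * V r * k\<^sup>2)" for t r
  define Y where "Y t r = - (F1 t r * Dn 2 C r) - G1 t r * Dn 1 C r - H t r * C r" for t r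
  define Psi where "Psi t r = - F1dd t r + G1d t r - H t r" for t r
  have pt: "\<alpha> t r * DFE a b c p n lam k A C 0 t r = \<alpha> t r * (Dn 2 A t * C r) + A t * Y t r" if r: "r > 0" for t r
  proof -
    have pos: "lam * exp (k * r) \<noteq> 0" using lam by simp
    have e0: "(lam * exp (k * r) + 0 * (A t * C r)) powr p = V r" using U0_powr(1)[OF lam] by (simp add: V_def)
    have e1: "(lam * exp (k * r) + 0 * (A t * C r)) powr (p - 1) = V r / (lam * exp (k * r))"
      using U0_powr(2)[OF lam] by (simp add: V_def)
    have e2: "(lam * exp (k * r) + 0 * (A t * C r)) powr (p - 1 - 1) = V r / (lam * exp (k * r))\<^sup>2"
      using U0_powr(3)[OF lam] by (simp add: V_def)
    show ?thesis
      unfolding DFE_def dgE_def e0 e1 e2 Y_def F1_def G1_def H_def W_def m_def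
      using pos r by (simp add: field_simps power2_eq_square)
  qed
  have phi: "Phi \<alpha> a b c p n lam k t r = pd 2 0 \<alpha> t r + Psi t r" if r: "r > 0" for t r
    unfolding Phi_def Psi_def F1dd_def G1d_def H_def W_def Wd_def m_def mp_def V_def
    using r by (simp add: field_simps power2_eq_square)
  have sA: "sm1 A" unfolding A_def by (rule sm1_AA)
  have sC: "sm1 C" unfolding C_def by (rule sm1_CC)
  have dV: "((\<lambda>x. V x) has_real_derivative p * k * V r) (at r)" for r unfolding V_def by (rule VV_der)
  have dm: "((\<lambda>x. m x) has_real_derivative mp r) (at r)" if "r > 0" for r
    unfolding m_def mp_def using that by (auto intro!: derivative_eq_intros simp: power2_eq_square)
  have da: "((\<lambda>x. \<alpha> t x) has_real_derivative pd 0 1 \<alpha> t r) (at r)" if "r > 0" for t r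
    using smooth_der(2)[OF sa that, of 0 0 t] by simp
  have da1: "((\<lambda>x. pd 0 1 \<alpha> t x) has_real_derivative pd 0 2 \<alpha> t r) (at r)" if "r > 0" for t r
    using smooth_der(2)[OF sa that, of 0 1 t] by (simp add: numeral_2_eq_2)
  have dat: "((\<lambda>s. \<alpha> s r) has_real_derivative pd 1 0 \<alpha> t r) (at t)" if "r > 0" for t r
    using smooth_der(1)[OF sa that, of 0 0 t] by simp
  have dat1: "((\<lambda>s. pd 1 0 \<alpha> s r) has_real_derivative pd 2 0 \<alpha> t r) (at t)" if "r > 0" for t r
    using smooth_der(1)[OF sa that, of 1 0 t] by (simp add: numeral_2_eq_2)
  have dF1: "((\<lambda>x. F1 t x) has_real_derivative F1d t r) (at r)" if "r > 0" for t r
    unfolding F1_def F1d_def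
    by (rule DERIV_cong[OF DERIV_mult[OF da[OF that] DERIV_add[OF DERIV_const DERIV_cmult[OF dV]]]]) (simp add: algebra_simps)
  have dF1d: "((\<lambda>x. F1d t x) has_real_derivative F1dd t r) (at r)" if "r > 0" for t r
    unfolding F1d_def F1dd_def
    by (rule DERIV_cong[OF DERIV_add[OF DERIV_mult[OF da1[OF that] DERIV_add[OF DERIV_const DERIV_cmult[OF dV]]]
          DERIV_mult[OF da[OF that] DERIV_cmult[OF DERIV_cmult[OF dV]]]]]) (simp add: algebra_simps)
  have dW: "((\<lambda>x. W x) has_real_derivative Wd r) (at r)" if "r > 0" for r
    unfolding W_def Wd_def
    by (rule DERIV_cong[OF DERIV_add[OF DERIV_add[OF DERIV_cmult[OF dm[OF that]] DERIV_mult[OF DERIV_cmult[OF dm[OF that]] dV]]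
          DERIV_cmult[OF dV]]]) (simp add: algebra_simps)
  have dG1: "((\<lambda>x. G1 t x) has_real_derivative G1d t r) (at r)" if "r > 0" for t r
    unfolding G1_def G1d_def
    by (rule DERIV_cong[OF DERIV_mult[OF da[OF that] dW[OF that]]]) (simp add: algebra_simps)
  have Av: "Dn j A t = 0" if "j < K" "t = t0 \<or> t = t1" for j t
    unfolding A_def using AA_vanish[OF w that(1)] that(2) by (auto simp: t1_def)
  have Cv: "Dn j C r = 0" if "j < K" "r = r0 \<or> r = r1" for j r
    unfolding C_def using CC_vanish[OF w that(1)] that(2) by (auto simp: r1_def)
  have dA: "(Dn j A has_real_derivative Dn (Suc j) A x) (at x)" for j x by (rule Dn_der[OF sA])
  have dC: "(Dn j C has_real_derivative Dn (Suc j) C x) (at x)" for j x by (rule Dn_der[OF sC])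
  have cA: "continuous_on S (Dn j A)" for j S by (rule continuous_on_subset[OF cont_sm1[OF sA]]) simp
  have cC: "continuous_on S (Dn j C)" for j S by (rule continuous_on_subset[OF cont_sm1[OF sC]]) simp
  have tpart: "integral {t0..t1} (\<lambda>t. \<alpha> t r * Dn 2 A t) = integral {t0..t1} (\<lambda>t. pd 2 0 \<alpha> t r * A t)"
    if r: "r \<in> {r0..r1}" for r
  proof -
    have rp: "r > 0" using r r0 by auto
    have "integral {t0..t1} (\<lambda>t. \<alpha> t r * Dn 2 A t) = integral {t0..t1} (\<lambda>t. pd 2 0 \<alpha> t r * Dn 0 A t)"
    proof (rule ibp2[OF tt])
      show "\<And>x. ((\<lambda>t. \<alpha> t r) has_real_derivative pd 1 0 \<alpha> x r) (at x)" by (rule dat[OF rp])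
      show "\<And>x. ((\<lambda>t. pd 1 0 \<alpha> t r) has_real_derivative pd 2 0 \<alpha> x r) (at x)" by (rule dat1[OF rp])
      show "\<And>x. (Dn 0 A has_real_derivative Dn 1 A x) (at x)" using dA[of 0] by simp
      show "\<And>x. (Dn 1 A has_real_derivative Dn 2 A x) (at x)" using dA[of 1] by (simp add: numeral_2_eq_2)
      show "continuous_on {t0..t1} (\<lambda>t. pd 2 0 \<alpha> t r)" by (rule smooth_cont_t[OF sa rp])
      show "continuous_on {t0..t1} (Dn 2 A)" by (rule cA)
      show "Dn 0 A t0 = 0" "Dn 0 A t1 = 0" "Dn 1 A t0 = 0" "Dn 1 A t1 = 0" using Av[of 0 t0] Av[of 0 t1] Av[of 1 t0] Av[of 1 t1] K by simp_all
    qed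
    then show ?thesis by simp
  qed
  have ca: "continuous_on {r0..r1} (\<lambda>r. pd i j \<alpha> t r)" for i j t by (rule smooth_cont_r[OF sa r0])
  have ca0: "continuous_on {r0..r1} (\<lambda>r. \<alpha> t r)" for t using ca[of 0 0 t] by simp
  have cm: "continuous_on {r0..r1} m" "continuous_on {r0..r1} mp"
    unfolding m_def mp_def using r0 by (auto intro!: continuous_intros)
  have cV: "continuous_on {r0..r1} V" unfolding V_def by (rule cont_VV)
  have rpart: "integral {r0..r1} (\<lambda>r. Y t r) = integral {r0..r1} (\<lambda>r. Psi t r * C r)" for t
  proof -
    have cF1dd: "continuous_on {r0..r1} (F1dd t)" unfolding F1dd_def
      by (intro continuous_intros ca ca0 cV)
    have cG1d: "continuous_on {r0..r1} (G1d t)" unfolding G1d_def Wd_def W_def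
      by (intro continuous_intros ca ca0 cV cm)
    have cF1: "continuous_on {r0..r1} (F1 t)" unfolding F1_def by (intro continuous_intros ca0 cV)
    have cG1: "continuous_on {r0..r1} (G1 t)" unfolding G1_def W_def by (intro continuous_intros ca0 cV cm)
    have cH: "continuous_on {r0..r1} (H t)" unfolding H_def by (intro continuous_intros ca0 cV cm)
    have i1: "integral {r0..r1} (\<lambda>r. F1 t r * Dn 2 C r) = integral {r0..r1} (\<lambda>r. F1dd t r * Dn 0 C r)"
    proof (rule ibp2[OF rr])
      show "\<And>x. x \<in> {r0..r1} \<Longrightarrow> (F1 t has_real_derivative F1d t x) (at x)" using dF1 r0 by auto
      show "\<And>x. x \<in> {r0..r1} \<Longrightarrow> (F1d t has_real_derivative F1dd t x) (at x)" using dF1d r0 by auto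
      show "\<And>x. (Dn 0 C has_real_derivative Dn 1 C x) (at x)" using dC[of 0] by simp
      show "\<And>x. (Dn 1 C has_real_derivative Dn 2 C x) (at x)" using dC[of 1] by (simp add: numeral_2_eq_2)
      show "continuous_on {r0..r1} (F1dd t)" by (rule cF1dd)
      show "continuous_on {r0..r1} (Dn 2 C)" by (rule cC)
      show "Dn 0 C r0 = 0" "Dn 0 C r1 = 0" "Dn 1 C r0 = 0" "Dn 1 C r1 = 0" using Cv[of 0 r0] Cv[of 0 r1] Cv[of 1 r0] Cv[of 1 r1] K by simp_all
    qed
    have i2: "integral {r0..r1} (\<lambda>r. G1 t r * Dn 1 C r) = - integral {r0..r1} (\<lambda>r. G1d t r * Dn 0 C r)"
    proof (rule ibp1[OF rr])
      show "\<And>x. x \<in> {r0..r1} \<Longrightarrow> (G1 t has_real_derivative G1d t x) (at x)" using dG1 r0 by auto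
      show "\<And>x. x \<in> {r0..r1} \<Longrightarrow> (Dn 0 C has_real_derivative Dn 1 C x) (at x)" using dC[of 0] by simp
      show "continuous_on {r0..r1} (G1d t)" by (rule cG1d)
      show "continuous_on {r0..r1} (Dn 1 C)" by (rule cC)
      show "Dn 0 C r0 = 0" "Dn 0 C r1 = 0" using Cv[of 0 r0] Cv[of 0 r1] K by simp_all
    qed
    have int: "f integrable_on {r0..r1}" if "continuous_on {r0..r1} f" for f :: "real \<Rightarrow> real"
      by (rule integrable_continuous_real[OF that])
    have cC0: "continuous_on {r0..r1} C" using cC[where j=0 and S="{r0..r1}"] by simp
    have Ye: "(\<lambda>r. Y t r) = (\<lambda>r. (- (F1 t r * Dn 2 C r) - G1 t r * Dn 1 C r) - H t r * C r)" by (simp add: Y_def fun_eq_iff)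
    have Pe: "(\<lambda>r. Psi t r * C r) = (\<lambda>r. (- (F1dd t r * C r) + G1d t r * C r) - H t r * C r)"
      by (simp add: Psi_def fun_eq_iff algebra_simps)
    have "integral {r0..r1} (\<lambda>r. Y t r) = (- integral {r0..r1} (\<lambda>r. F1 t r * Dn 2 C r) - integral {r0..r1} (\<lambda>r. G1 t r * Dn 1 C r)) - integral {r0..r1} (\<lambda>r. H t r * C r)"
      unfolding Ye
      by (subst integral_diff, (intro int continuous_intros cF1 cG1 cH cC cC0)+,
          subst integral_diff, (intro int continuous_intros cF1 cG1 cH cC cC0)+, simp)
    also have "\<dots> = (- integral {r0..r1} (\<lambda>r. F1dd t r * C r) + integral {r0..r1} (\<lambda>r. G1d t r * C r)) - integral {r0..r1} (\<lambda>r. H t r * C r)"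
      using i1 i2 by simp
    also have "\<dots> = integral {r0..r1} (\<lambda>r. Psi t r * C r)"
      unfolding Pe
      by (subst integral_diff, (intro int continuous_intros cF1dd cG1d cH cC cC0)+,
          subst integral_add, (intro int continuous_intros cF1dd cG1d cH cC cC0)+, simp)
    finally show ?thesis .
  qed
  have c2a: "continuous_on ?R (\<lambda>x. pd i j \<alpha> (fst x) (snd x))" for i j by (rule smooth_cont2[OF sa Rsub])
  have c2a0: "continuous_on ?R (\<lambda>x. \<alpha> (fst x) (snd x))" using c2a[of 0 0] by simp
  have c2A: "continuous_on ?R (\<lambda>x. Dn j A (fst x))" for j by (rule cont2_t[OF cont_sm1[OF sA]])
  have c2C: "continuous_on ?R (\<lambda>x. Dn j C (snd x))" for j by (rule cont2_r[OF cont_sm1[OF sC]])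
  have c2A0: "continuous_on ?R (\<lambda>x. A (fst x))" using c2A[of 0] by simp
  have c2C0: "continuous_on ?R (\<lambda>x. C (snd x))" using c2C[of 0] by simp
  have c2V: "continuous_on ?R (\<lambda>x. V (snd x))" unfolding V_def VV_def by (intro continuous_intros)
  have c2m: "continuous_on ?R (\<lambda>x. m (snd x))" "continuous_on ?R (\<lambda>x. mp (snd x))"
    unfolding m_def mp_def using cont2_m[of ?R n, OF Rpos] by auto
  have k1: "continuous_on ?R (\<lambda>(t, r). \<alpha> t r * (Dn 2 A t * C r))"
    unfolding case_prod_beta' by (intro continuous_intros c2a0 c2A c2C0)
  have k2: "continuous_on ?R (\<lambda>(t, r). A t * Y t r)"
    unfolding case_prod_beta' Y_def F1_def G1_def H_def W_def
    by (intro continuous_intros c2a0 c2A0 c2C c2C0 c2V c2m)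
  have k3: "continuous_on ?R (\<lambda>(t, r). pd 2 0 \<alpha> t r * A t * C r)"
    unfolding case_prod_beta' by (intro continuous_intros c2a c2A0 c2C0)
  have k4: "continuous_on ?R (\<lambda>(t, r). A t * (Psi t r * C r))"
    unfolding case_prod_beta' Psi_def F1dd_def G1d_def H_def W_def Wd_def
    by (intro continuous_intros c2a c2a0 c2A0 c2C0 c2V c2m)
  have s1: "integral ?R (\<lambda>(t, r). \<alpha> t r * DFE a b c p n lam k A C 0 t r) =
      integral ?R (\<lambda>(t, r). \<alpha> t r * (Dn 2 A t * C r) + A t * Y t r)"
    by (rule integral_cong) (use Rpos pt in auto)
  also have "\<dots> = integral ?R (\<lambda>(t, r). \<alpha> t r * (Dn 2 A t * C r)) + integral ?R (\<lambda>(t, r). A t * Y t r)"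
    using integral_add2[OF k1 k2] by (simp add: case_prod_beta')
  also have "integral ?R (\<lambda>(t, r). \<alpha> t r * (Dn 2 A t * C r)) = integral ?R (\<lambda>(t, r). pd 2 0 \<alpha> t r * A t * C r)"
  proof -
    have "integral ?R (\<lambda>(t, r). \<alpha> t r * (Dn 2 A t * C r)) = integral {r0..r1} (\<lambda>r. integral {t0..t1} (\<lambda>t. \<alpha> t r * (Dn 2 A t * C r)))"
      by (rule iter_t[OF k1])
    also have "\<dots> = integral {r0..r1} (\<lambda>r. integral {t0..t1} (\<lambda>t. pd 2 0 \<alpha> t r * A t * C r))"
    proof (rule integral_cong)
      fix r assume r: "r \<in> {r0..r1}"
      have "integral {t0..t1} (\<lambda>t. \<alpha> t r * (Dn 2 A t * C r)) = integral {t0..t1} (\<lambda>t. \<alpha> t r * Dn 2 A t * C r)"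
        by (simp add: mult.assoc)
      also have "\<dots> = integral {t0..t1} (\<lambda>t. \<alpha> t r * Dn 2 A t) * C r"
        by (rule Henstock_Kurzweil_Integration.integral_mult_left)
      also have "\<dots> = integral {t0..t1} (\<lambda>t. pd 2 0 \<alpha> t r * A t) * C r" using tpart[OF r] by simp
      also have "\<dots> = integral {t0..t1} (\<lambda>t. pd 2 0 \<alpha> t r * A t * C r)"
        by (rule Henstock_Kurzweil_Integration.integral_mult_left[symmetric])
      finally show "integral {t0..t1} (\<lambda>t. \<alpha> t r * (Dn 2 A t * C r)) = integral {t0..t1} (\<lambda>t. pd 2 0 \<alpha> t r * A t * C r)" .
    qed
    also have "\<dots> = integral ?R (\<lambda>(t, r). pd 2 0 \<alpha> t r * A t * C r)"
      by (rule iter_t[OF k3, symmetric])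
    finally show ?thesis .
  qed
  also have "integral ?R (\<lambda>(t, r). A t * Y t r) = integral ?R (\<lambda>(t, r). A t * (Psi t r * C r))"
  proof -
    have "integral ?R (\<lambda>(t, r). A t * Y t r) = integral {t0..t1} (\<lambda>t. integral {r0..r1} (\<lambda>r. A t * Y t r))"
      by (rule iter_r[OF k2])
    also have "\<dots> = integral {t0..t1} (\<lambda>t. integral {r0..r1} (\<lambda>r. A t * (Psi t r * C r)))"
    proof (rule integral_cong)
      fix t
      have "integral {r0..r1} (\<lambda>r. A t * Y t r) = A t * integral {r0..r1} (\<lambda>r. Y t r)"
        by (rule Henstock_Kurzweil_Integration.integral_mult_right)
      also have "\<dots> = A t * integral {r0..r1} (\<lambda>r. Psi t r * C r)" using rpart by simp
      also have "\<dots> = integral {r0..r1} (\<lambda>r. A t * (Psi t r * C r))"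
        by (rule Henstock_Kurzweil_Integration.integral_mult_right[symmetric])
      finally show "integral {r0..r1} (\<lambda>r. A t * Y t r) = integral {r0..r1} (\<lambda>r. A t * (Psi t r * C r))" .
    qed
    also have "\<dots> = integral ?R (\<lambda>(t, r). A t * (Psi t r * C r))"
      by (rule iter_r[OF k4, symmetric])
    finally show ?thesis .
  qed
  also have "integral ?R (\<lambda>(t, r). pd 2 0 \<alpha> t r * A t * C r) + integral ?R (\<lambda>(t, r). A t * (Psi t r * C r)) =
      integral ?R (\<lambda>(t, r). pd 2 0 \<alpha> t r * A t * C r + A t * (Psi t r * C r))"
    using integral_add2[OF k3 k4] by (simp add: case_prod_beta')
  also have "\<dots> = integral ?R (\<lambda>(t, r). Phi \<alpha> a b c p n lam k t r * (A t * C r))"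
    by (rule integral_cong) (use Rpos phi in \<open>auto simp: algebra_simps\<close>)
  finally show ?thesis unfolding A_def C_def t1_def r1_def .
qed

lemma cont_Phi:
  assumes sa: "smooth_on2 Omega \<alpha>" and S: "S \<subseteq> Omega"
  shows "continuous_on S (\<lambda>x. Phi \<alpha> a b c p n lam k (fst x) (snd x))"
proof -
  have pos: "\<And>x. x \<in> S \<Longrightarrow> snd x > 0" using S by (auto simp: Omega_def)
  have c: "continuous_on S (\<lambda>x. pd i j \<alpha> (fst x) (snd x))" for i j by (rule smooth_cont2[OF sa S])
  have c0: "continuous_on S (\<lambda>x. \<alpha> (fst x) (snd x))" using c[of 0 0] by simp
  have cm: "continuous_on S (\<lambda>x. (n - 1) / snd x)" "continuous_on S (\<lambda>x. - (n - 1) / (snd x)\<^sup>2)"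
    using cont2_m[of S n, OF pos] by auto
  have cV: "continuous_on S (\<lambda>x. VV lam p k (snd x))" unfolding VV_def by (intro continuous_intros)
  show ?thesis unfolding Phi_def by (intro continuous_intros c c0 cm cV)
qed

lemma AA_nonneg:
  assumes "w > 0" "x0 \<le> x" "x \<le> x0 + pi / w"
  shows "AA w x0 K x \<ge> 0"
proof -
  have "0 \<le> w * x + - (w * x0)" using assms by (simp add: algebra_simps)
  moreover have "w * x + - (w * x0) \<le> pi"
  proof -
    have "w * (x - x0) \<le> w * (pi / w)" using assms by (intro mult_left_mono) auto
    then show ?thesis using assms by (simp add: algebra_simps)
  qed
  ultimately have "sin (w * x + - (w * x0)) \<ge> 0" by (rule sin_ge_zero)
  then show ?thesis unfolding AA_def by simp
qed

lemma CC_nonneg: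
  assumes "w > 0" "x0 \<le> x" "x \<le> x0 + pi / w"
  shows "CC w x0 K k x \<ge> 0"
proof -
  have "AA w x0 K x \<ge> 0" by (rule AA_nonneg[OF assms])
  then show ?thesis unfolding AA_def CC_def by simp
qed

lemma Phi_zero:
  fixes \<alpha> :: "real \<Rightarrow> real \<Rightarrow> real" and T X :: "real \<Rightarrow> real \<Rightarrow> (nat \<Rightarrow> nat \<Rightarrow> real) \<Rightarrow> real"
  assumes sa: "smooth_on2 Omega \<alpha>" and lT: "local_fun T" and lX: "local_fun X"
    and id: "\<forall>u. admissible u \<longrightarrow> smooth_on2 Omega (eval_df T u) \<and> smooth_on2 Omega (eval_df X u) \<and>
       (\<forall>(t, r)\<in>Omega. \<alpha> t r * Eop n a b c p u t r = pd_t (eval_df T u) t r + pd_r (eval_df X u) t r)"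
    and lam: "lam > 0" and rs: "rs > 0"
  shows "Phi \<alpha> a b c p n lam k ts rs = 0"
proof (rule ccontr)
  assume ne: "Phi \<alpha> a b c p n lam k ts rs \<noteq> 0"
  obtain kT where kT: "\<And>t r J J'. (\<And>i j. i + j \<le> kT \<Longrightarrow> J i j = J' i j) \<Longrightarrow> T t r J = T t r J'"
    using lT unfolding local_fun_def by blast
  obtain kX where kX: "\<And>t r J J'. (\<And>i j. i + j \<le> kX \<Longrightarrow> J i j = J' i j) \<Longrightarrow> X t r J = X t r J'"
    using lX unfolding local_fun_def by blast
  define K where "K = kT + kX + 2"
  have K: "kT < K" "kX < K" "2 \<le> K" by (auto simp: K_def)
  define P where "P x = Phi \<alpha> a b c p n lam k (fst x) (snd x)" for x
  define z where "z = (ts, rs)"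
  define Q where "Q x = P z * P x" for x
  have zO: "z \<in> Omega" using rs by (simp add: z_def)
  have cP: "continuous_on Omega P" unfolding P_def by (rule cont_Phi[OF sa order_refl])
  have "isCont P z" using cP zO open_Omega continuous_on_eq_continuous_at by blast
  then have cQ: "isCont Q z" unfolding Q_def by (intro continuous_intros)
  have Pz: "P z \<noteq> 0" using ne by (simp add: P_def z_def)
  have Qz: "Q z > 0" unfolding Q_def using Pz by (metis not_real_square_gt_zero)
  have "eventually (\<lambda>x. Q x > 0) (nhds z)"
    using cQ Qz unfolding isCont_def by (simp add: order_tendstoD(1) tendsto_at_iff_tendsto_nhds)
  then obtain d where d: "d > 0" "\<And>x. dist x z < d \<Longrightarrow> Q x > 0"
    unfolding eventually_nhds_metric by blast
  define h where "h = min d rs / 4"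
  have h: "h > 0" "h < rs" "2 * h < d" using d rs by (auto simp: h_def)
  define w where "w = pi / (2 * h)"
  have w: "w > 0" using h by (simp add: w_def)
  have pw: "pi / w = 2 * h" using h by (simp add: w_def)
  define t0 where "t0 = ts - h"
  define r0 where "r0 = rs - h"
  have r0: "r0 > 0" using h by (simp add: r0_def)
  let ?R = "cbox (t0, r0) (t0 + pi / w, r0 + pi / w)"
  define A where "A = AA w t0 K"
  define C where "C = CC w r0 K k"
  have s1: "integral ?R (\<lambda>(t, r). \<alpha> t r * Eop n a b c p (uu lam k (AA w t0 K) (CC w r0 K k) e) t r) =
      integral ?R (\<lambda>(t, r). \<alpha> t r * Eop n a b c p (uu lam k (AA w t0 K) (CC w r0 K k) 0) t r)"
    if "\<bar>e\<bar> < lam" for e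
    apply (rule step1[where T=T and X=X and kT=kT and kX=kX, OF kT kX _ K(1,2) w r0 that])
      apply simp
     apply simp
    using id apply blast
    done
  have ca: "continuous_on Omega (\<lambda>(t, r). \<alpha> t r)" using smooth_cont[OF sa, of 0 0] by simp
  have s2: "integral ?R (\<lambda>(t, r). \<alpha> t r * DFE a b c p n lam k (AA w t0 K) (CC w r0 K k) 0 t r) = 0"
    by (rule step2[OF ca s1 lam r0])
  have s3: "integral ?R (\<lambda>(t, r). Phi \<alpha> a b c p n lam k t r * (A t * C r)) = 0"
    using step3[OF sa r0 w K(3) lam, of t0 a b c p n k] s2 unfolding A_def C_def by simp
  define f where "f x = P z * (P x * (A (fst x) * C (snd x)))" for x
  have Rsub: "?R \<subseteq> Omega" by (rule rect_sub[OF r0])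
  have cf: "continuous_on ?R f"
  proof -
    have c1: "continuous_on ?R P" using continuous_on_subset[OF cP Rsub] .
    have c2: "continuous_on ?R (\<lambda>x. A (fst x))" unfolding A_def using cont2_t[OF cont_sm1[OF sm1_AA, of 0]] by simp
    have c3: "continuous_on ?R (\<lambda>x. C (snd x))" unfolding C_def using cont2_r[OF cont_sm1[OF sm1_CC, of 0]] by simp
    show ?thesis unfolding f_def by (intro continuous_intros c1 c2 c3)
  qed
  have fint: "integral ?R f = 0"
  proof -
    have "integral ?R f = P z * integral ?R (\<lambda>(t, r). Phi \<alpha> a b c p n lam k t r * (A t * C r))"
      unfolding f_def P_def case_prod_beta'
      by (rule Henstock_Kurzweil_Integration.integral_mult_right)
    then show ?thesis using s3 by simp
  qed
  have f0: "(f has_integral 0) ?R" using fint integrable_continuous[OF cf] by (metis has_integral_integral)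
  have fnn: "0 \<le> f x" if x: "x \<in> box (t0, r0) (t0 + pi / w, r0 + pi / w)" for x
  proof -
    obtain t r where xe: "x = (t, r)" by (cases x)
    have "x \<in> cbox (t0, r0) (t0 + pi / w, r0 + pi / w)" using x box_subset_cbox by blast
    then have tr: "t0 \<le> t" "t \<le> t0 + pi / w" "r0 \<le> r" "r \<le> r0 + pi / w"
      unfolding xe by (auto simp: cbox_interval)
    have "dist x z \<le> \<bar>t - ts\<bar> + \<bar>r - rs\<bar>"
      unfolding xe z_def dist_Pair_Pair dist_real_def using sqrt_sum_squares_le_sum_abs[of "t - ts" "r - rs"] by simp
    also have "\<dots> \<le> 2 * h" using tr pw by (auto simp: t0_def r0_def)
    finally have "dist x z < d" using h(3) by linarith
    then have "Q x > 0" by (rule d(2))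
    moreover have "A t \<ge> 0" unfolding A_def by (rule AA_nonneg[OF w]) (use tr in auto)
    moreover have "C r \<ge> 0" unfolding C_def by (rule CC_nonneg[OF w]) (use tr in auto)
    ultimately have "0 \<le> (P z * P (t, r)) * (A t * C r)" unfolding Q_def xe by simp
    then show ?thesis unfolding f_def xe by (simp add: mult.assoc)
  qed
  have ne_box: "box (t0, r0) (t0 + pi / w, r0 + pi / w) \<noteq> {}" using w by (auto simp: box_ne_empty Basis_prod_def)
  have zR: "z \<in> ?R" using h pw by (auto simp: z_def t0_def r0_def cbox_Pair_iff)
  have "f z = 0" by (rule has_integral_0_cbox_imp_0[OF cf fnn f0 ne_box zR])
  moreover have "f z > 0"
  proof -
    have wh: "w * h = pi / 2" using h by (simp add: w_def)
    have "w * ts + - (w * t0) = w * h" by (simp add: t0_def algebra_simps)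
    then have e1: "w * ts + - (w * t0) = pi / 2" using wh by simp
    have "A ts = 1" unfolding A_def AA_def by (simp only: e1 sin_pi_half power_one mult_1_right)
    moreover have "w * rs + - (w * r0) = w * h" by (simp add: r0_def algebra_simps)
    then have e2: "w * rs + - (w * r0) = pi / 2" using wh by simp
    have "C rs = exp (k * rs)" unfolding C_def CC_def by (simp only: e2 sin_pi_half power_one mult_1_left)
    ultimately have "f z = Q z * exp (k * rs)" unfolding f_def Q_def z_def by (simp add: mult.assoc)
    then show ?thesis using Qz by simp
  qed
  ultimately show False by simp
qed

lemma alg_final:
  fixes Phi0 B0 A0 A1 d p r :: real
  assumes d: "d \<noteq> 0"
    and h: "\<And>lam k. lam > 0 \<Longrightarrow> Phi0 + (lam powr p * exp (p * k * r)) * (B0 + 2 * k * d * A1 + k\<^sup>2 * d * (p + 1) * A0) = 0"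
  shows "(p \<noteq> -1 \<longrightarrow> A0 = 0) \<and> (p = -1 \<longrightarrow> A1 = 0 \<and> B0 = 0 \<and> Phi0 = 0)"
proof (cases "p = 0")
  case True
  have e0: "Phi0 + (B0 + 2 * k * d * A1 + k\<^sup>2 * d * A0) = 0" for k using h[of 1 k] True by simp
  have "Phi0 + B0 = 0" using e0[of 0] by simp
  moreover have "Phi0 + (B0 + 2 * d * A1 + d * A0) = 0" using e0[of 1] by simp
  moreover have "Phi0 + (B0 - 2 * d * A1 + d * A0) = 0" using e0[of "-1"] by simp
  ultimately have "d * A0 = 0" by linarith
  then show ?thesis using d True by simp
next
  case False
  have h0: "Phi0 + lam powr p * B0 = 0" if "lam > 0" for lam using h[of lam 0] that by simp
  have "Phi0 + B0 = 0" using h0[of 1] by simp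
  moreover have "Phi0 + 2 powr p * B0 = 0" using h0[of 2] by simp
  moreover have "2 powr p \<noteq> 1" using False by simp
  ultimately have B0: "B0 = 0" and P0: "Phi0 = 0"
    by (metis add_diff_cancel_left' diff_self mult_cancel_right1 right_minus_eq)+
  have e1: "exp (p * k * r) * (2 * k * d * A1 + k\<^sup>2 * d * (p + 1) * A0) = 0" for k
    using h[of 1 k] B0 P0 by simp
  have "2 * d * A1 + d * (p + 1) * A0 = 0" using e1[of 1] by simp
  moreover have "- 2 * d * A1 + d * (p + 1) * A0 = 0" using e1[of "-1"] by simp
  ultimately have "d * (p + 1) * A0 = 0" "d * A1 = 0" by linarith+
  then have "(p + 1) * A0 = 0" "A1 = 0" using d by auto
  then show ?thesis using B0 P0 by (cases "p = -1") auto
qed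

lemma const_r:
  assumes sa: "smooth_on2 Omega \<alpha>" and z: "\<And>t r. r > 0 \<Longrightarrow> pd 0 1 \<alpha> t r = 0" and r: "r > 0"
  shows "\<alpha> t r = \<alpha> t 1"
proof -
  have d: "((\<lambda>x. \<alpha> t x) has_real_derivative 0) (at x)" if "x > 0" for x
    using smooth_der(2)[OF sa that, of 0 0 t] z[OF that] by simp
  have c: "continuous_on {u..v} (\<lambda>x. \<alpha> t x)" if "u > 0" for u v
    using smooth_cont_r[OF sa that, of v 0 0 t] by simp
  consider "r < 1" | "r = 1" | "r > 1" by linarith
  then show ?thesis
  proof cases
    case 1 show ?thesis by (rule DERIV_isconst_end[OF 1 c[OF r], symmetric]) (use r d in auto)
  next
    case 2 then show ?thesis by simp
  next
    case 3 show ?thesis by (rule DERIV_isconst_end[OF 3 c]) (use d in auto)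
  qed
qed

lemma kin_imp:
  assumes n: "n \<noteq> 1" and hyp: "(b * p)\<^sup>2 + a\<^sup>2 * (c + b)\<^sup>2 \<noteq> 0"
    and kin: "kinematic_cl n a b c p \<alpha>"
  shows "a = p * b"
proof (rule ccontr)
  assume ne: "a \<noteq> p * b"
  define d where "d = a - b * p"
  have d: "d \<noteq> 0" using ne by (simp add: d_def algebra_simps)
  obtain T X where sa: "smooth_on2 Omega \<alpha>" and ex: "\<exists>(t, r)\<in>Omega. \<alpha> t r \<noteq> 0"
    and lT: "local_fun T" and lX: "local_fun X"
    and id: "\<forall>u. admissible u \<longrightarrow> smooth_on2 Omega (eval_df T u) \<and> smooth_on2 Omega (eval_df X u) \<and>
       (\<forall>(t, r)\<in>Omega. \<alpha> t r * Eop n a b c p u t r = pd_t (eval_df T u) t r + pd_r (eval_df X u) t r)"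
    using kin unfolding kinematic_cl_def by blast
  have PZ: "Phi \<alpha> a b c p n lam k t r = 0" if "lam > 0" "r > 0" for lam k t r
    by (rule Phi_zero[OF sa lT lX id that])
  define B0 where "B0 t r = b * (- pd 0 2 \<alpha> t r + (n - 1) / r * pd 0 1 \<alpha> t r + (- (n - 1) / r\<^sup>2) * \<alpha> t r)" for t r
  define P0 where "P0 t r = pd 2 0 \<alpha> t r - c * pd 0 2 \<alpha> t r + c * (- (n - 1) / r\<^sup>2 * \<alpha> t r + (n - 1) / r * pd 0 1 \<alpha> t r)" for t r
  have key: "(p \<noteq> -1 \<longrightarrow> \<alpha> t r = 0) \<and> (p = -1 \<longrightarrow> pd 0 1 \<alpha> t r = 0 \<and> B0 t r = 0 \<and> P0 t r = 0)"
    if r: "r > 0" for t r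
  proof (rule alg_final[OF d])
    fix lam k :: real assume "lam > 0"
    from PZ[OF this r, of k t]
    show "P0 t r + (lam powr p * exp (p * k * r)) * (B0 t r + 2 * k * d * pd 0 1 \<alpha> t r + k\<^sup>2 * d * (p + 1) * \<alpha> t r) = 0"
      unfolding Phi_def VV_def P0_def B0_def d_def .
  qed
  have all0: "\<alpha> t r = 0" if r: "r > 0" for t r
  proof (cases "p = -1")
    case False then show ?thesis using key[OF r] by simp
  next
    case True
    have A1: "pd 0 1 \<alpha> t r = 0" if "r > 0" for t r using key[OF that] True by simp
    have A2: "pd 0 2 \<alpha> t r = 0" if r: "r > 0" for t r
    proof -
      have "pd 0 2 \<alpha> t r = pd_r (pd 0 1 \<alpha>) t r" by (simp add: pd_def numeral_2_eq_2)
      also have "\<dots> = pd_r (\<lambda>_ _. 0) t r" by (rule loc_pd_r[OF A1 r])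
      also have "\<dots> = 0" by (simp add: pd_r_def)
      finally show ?thesis .
    qed
    have B: "b * (- (n - 1) / r\<^sup>2 * \<alpha> t r) = 0" if "r > 0" for t r
    proof -
      have "B0 t r = 0" using key[OF that] True by simp
      then show ?thesis unfolding B0_def A1[OF that] A2[OF that] by simp
    qed
    have P: "pd 2 0 \<alpha> t r + c * (- (n - 1) / r\<^sup>2 * \<alpha> t r) = 0" if "r > 0" for t r
    proof -
      have "P0 t r = 0" using key[OF that] True by simp
      then show ?thesis unfolding P0_def A1[OF that] A2[OF that] by simp
    qed
    show ?thesis
    proof (cases "b = 0")
      case False
      then have "(n - 1) / r\<^sup>2 * \<alpha> t r = 0" using B[OF r] by simp
      then show ?thesis using n r by simp
    next
      case True
      have c: "c \<noteq> 0" using hyp True \<open>p = -1\<close> by auto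
      have cst: "\<alpha> s x = \<alpha> s 1" if "x > 0" for s x by (rule const_r[OF sa A1 that])
      have att: "pd 2 0 \<alpha> t x = pd 2 0 \<alpha> t 1" if "x > 0" for x
      proof -
        have fe: "(\<lambda>s. \<alpha> s x) = (\<lambda>s. \<alpha> s 1)" using cst[OF that] by auto
        have "pd 2 0 \<alpha> t x = deriv (\<lambda>s'. deriv (\<lambda>s. \<alpha> s x) s') t"
          by (simp add: pd_def pd_t_def numeral_2_eq_2)
        also have "\<dots> = deriv (\<lambda>s'. deriv (\<lambda>s. \<alpha> s 1) s') t" by (simp only: fe)
        also have "\<dots> = pd 2 0 \<alpha> t 1" by (simp add: pd_def pd_t_def numeral_2_eq_2)
        finally show ?thesis .
      qed
      have e1: "pd 2 0 \<alpha> t 1 + c * (- (n - 1) * \<alpha> t 1) = 0" using P[of 1 t] by simp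
      have e2: "pd 2 0 \<alpha> t 1 + c * (- (n - 1) / 4 * \<alpha> t 1) = 0"
        using P[of 2 t] att[of 2] cst[of 2 t] by simp
      define Z where "Z = c * (n - 1) * \<alpha> t 1"
      have z1: "pd 2 0 \<alpha> t 1 = Z" using e1 unfolding Z_def by (simp add: algebra_simps)
      have z2: "pd 2 0 \<alpha> t 1 = Z / 4" using e2 unfolding Z_def by (simp add: field_simps)
      have "Z = 0" using z1 z2 by linarith
      then have "\<alpha> t 1 = 0" using c n unfolding Z_def by simp
      then show ?thesis using cst[OF r] by simp
    qed
  qed
  then show False using ex by auto
qed

theorem corollary1:
  fixes n a b c p :: real
  assumes "n \<noteq> 1"
    and "(b * p)\<^sup>2 + a\<^sup>2 * (c + b)\<^sup>2 \<noteq> 0"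
  shows "((\<exists>\<alpha>. kinematic_cl n a b c p \<alpha>) \<longleftrightarrow>
            (divergence_form n a b c p \<and> quasilinear_hyperbolic b p))
       \<and> ((divergence_form n a b c p \<and> quasilinear_hyperbolic b p) \<longleftrightarrow>
            (a = p * b \<and> p * b \<noteq> 0))"
proof -
  have A: "(divergence_form n a b c p \<and> quasilinear_hyperbolic b p) \<longleftrightarrow> (a = p * b \<and> p * b \<noteq> 0)"
  proof
    assume h: "divergence_form n a b c p \<and> quasilinear_hyperbolic b p"
    then have "a = p * b" using div_imp[OF assms(1)] by blast
    moreover have "p * b \<noteq> 0" using h by (simp add: quasilinear_hyperbolic_def mult.commute)
    ultimately show "a = p * b \<and> p * b \<noteq> 0" by blast
  next
    assume h: "a = p * b \<and> p * b \<noteq> 0"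
    then show "divergence_form n a b c p \<and> quasilinear_hyperbolic b p"
      using div_easy[of a p b n c] by (simp add: quasilinear_hyperbolic_def mult.commute)
  qed
  have B: "(\<exists>\<alpha>. kinematic_cl n a b c p \<alpha>) \<longleftrightarrow> (a = p * b \<and> p * b \<noteq> 0)"
  proof
    assume "\<exists>\<alpha>. kinematic_cl n a b c p \<alpha>"
    then obtain \<alpha> where k: "kinematic_cl n a b c p \<alpha>" by blast
    have a: "a = p * b" by (rule kin_imp[OF assms k])
    have "p * b \<noteq> 0"
    proof
      assume "p * b = 0"
      then have "b * p = 0" "a = 0" using a by (simp_all add: mult.commute)
      then show False using assms(2) by simp
    qed
    then show "a = p * b \<and> p * b \<noteq> 0" using a by blast
  next
    assume "a = p * b \<and> p * b \<noteq> 0"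
    then show "\<exists>\<alpha>. kinematic_cl n a b c p \<alpha>" using kin_easy[of a p b n c] by blast
  qed
  show ?thesis using A B by blast
qed

end
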